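(* There is no circulant weighing matrix $CW(143,81)$.
   Context: A circulant weighing matrix $CW(n,k)$ is an $n\times n$ circulant matrix $W$ (each row after the first is the right cyclic shift of the previous row) with all entries in $\{0,1,-1\}$ such that $WW^T=kI_n$. *)

theory Defs
  imports Main
begin

text \<open>An n x n matrix with integer entries is represented as a function
  nat => nat => int, with indices in {0..<n}.\<close>

definition circulant :: "nat \<Rightarrow> (nat \<Rightarrow> nat \<Rightarrow> int) \<Rightarrow> bool" where
  "circulant n W \<longleftrightarrow> (\<forall>i<n. \<forall>j<n. W i j = W 0 ((j + n - i) mod n))"

definition circulant_weighing_matrix :: "nat \<Rightarrow> nat \<Rightarrow> (nat \<Rightarrow> nat \<Rightarrow> int) \<Rightarrow> bool" where
  "circulant_weighing_matrix n k W \<longleftrightarrow>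
     circulant n W \<and>
     (\<forall>i<n. \<forall>j<n. W i j \<in> {0, 1, -1}) \<and>
     (\<forall>i<n. \<forall>j<n. (\<Sum>l<n. W i l * W j l) = (if i = j then int k else 0))"

end

theory Submission
  imports Defs "HOL-Library.Poly_Mapping" "HOL-Library.Numeral_Type"
begin

lemma pow_cong3:
  fixes x y :: "'a::comm_ring_1"
  assumes "(3::'a) dvd (x - y)"
  shows "(3::'a) dvd (x ^ n - y ^ n)"
proof (induction n)
  case 0 then show ?case by simp
next
  case (Suc n)
  have "x ^ Suc n - y ^ Suc n = x * (x ^ n - y ^ n) + y ^ n * (x - y)"
    by (simp add: algebra_simps)
  then show ?case using Suc assms by (simp add: dvd_add dvd_mult)
qed

lemma cube_lift:
  fixes x y :: "'a::comm_ring_1"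
  assumes "(3::'a) ^ k dvd (x - y)" "k \<ge> 1"
  shows "(3::'a) ^ (k + 1) dvd (x ^ 3 - y ^ 3)"
proof -
  obtain t where t: "x - y = 3 ^ k * t" using assms(1) by (auto elim: dvdE)
  have x: "x = y + 3 ^ k * t" using t by (simp add: algebra_simps)
  obtain k' where k': "k = Suc k'" using assms(2) by (cases k) auto
  define q where "q = (3::'a) ^ k'"
  have q1: "(3::'a) ^ k = 3 * q" unfolding q_def k' by simp
  have q2: "(3::'a) ^ (k + 1) = 9 * q" unfolding q_def k' by simp
  have "x ^ 3 - y ^ 3 = 3 ^ (k + 1) * (y^2 * t + 3 * q * y * t^2 + 3 * q^2 * t ^ 3)"
    unfolding x q1 q2 by (simp add: algebra_simps power2_eq_square power3_eq_cube)
  then show ?thesis by simp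
qed

lemma iter_lift:
  fixes x y :: "'a::comm_ring_1"
  assumes "(3::'a) dvd (x - y)"
  shows "(3::'a) ^ (j + 1) dvd (x ^ (3 ^ j) - y ^ (3 ^ j))"
proof (induction j)
  case 0 then show ?case using assms by simp
next
  case (Suc j)
  have "(3::'a) ^ (j + 1 + 1) dvd ((x ^ (3 ^ j)) ^ 3 - (y ^ (3 ^ j)) ^ 3)"
    by (rule cube_lift[OF Suc]) simp
  then show ?case by (simp add: power_mult[symmetric] mult.commute)
qed

lemma idem_unique:
  fixes e f :: "'a::comm_ring_1"
  assumes e: "(3::'a) ^ m dvd (e * e - e)" and f: "(3::'a) ^ m dvd (f * f - f)"
    and ef: "(3::'a) dvd (e - f)"
  shows "(3::'a) ^ m dvd (e - f)"
proof -
  let ?d = "e - f"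
  obtain s where s: "e * e - e = 3 ^ m * s" using e by (auto elim: dvdE)
  obtain t where t: "f * f - f = 3 ^ m * t" using f by (auto elim: dvdE)
  have ee: "e * e = e + 3 ^ m * s" using s by (simp add: algebra_simps)
  have ff: "f * f = f + 3 ^ m * t" using t by (simp add: algebra_simps)
  have "?d ^ 3 - ?d = (e+1)*(e*e - e) - (f+1)*(f*f - f) - 3*f*(e*e-e) + 3*e*(f*f-f)"
    by (simp add: algebra_simps power3_eq_cube)
  also have "\<dots> = 3 ^ m * ((e+1)*s - (f+1)*t - 3*f*s + 3*e*t)"
    unfolding s t by (simp add: algebra_simps)
  finally have d3: "(3::'a) ^ m dvd (?d ^ 3 - ?d)" by simp
  have "\<forall>i. 1 \<le> i \<longrightarrow> i \<le> m \<longrightarrow> (3::'a) ^ i dvd ?d"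
  proof (intro allI)
    fix i show "1 \<le> i \<longrightarrow> i \<le> m \<longrightarrow> (3::'a) ^ i dvd ?d"
    proof (induction i)
      case 0 then show ?case by simp
    next
      case (Suc i)
      show ?case
      proof (intro impI)
        assume "1 \<le> Suc i" "Suc i \<le> m"
        show "(3::'a) ^ Suc i dvd ?d"
        proof (cases "i = 0")
          case True then show ?thesis using ef by simp
        next
          case False
          then have "(3::'a) ^ i dvd ?d" using Suc \<open>Suc i \<le> m\<close> by simp
          then obtain u where u: "?d = 3 ^ i * u" by (auto elim: dvdE)
          have "?d ^ 3 = 3 ^ (3 * i) * u ^ 3" unfolding u by (simp add: power_mult_distrib power_mult mult.commute)
          moreover have "(3::'a) ^ Suc i dvd 3 ^ (3 * i)" using False by (intro le_imp_power_dvd) simp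
          ultimately have A: "(3::'a) ^ Suc i dvd ?d ^ 3" by simp
          have B: "(3::'a) ^ Suc i dvd ?d ^ 3 - ?d"
            using d3 \<open>Suc i \<le> m\<close> by (meson dvd_trans le_imp_power_dvd)
          have "?d = ?d ^ 3 - (?d ^ 3 - ?d)" by simp
          then show ?thesis using A B by (metis dvd_diff)
        qed
      qed
    qed
  qed
  then show ?thesis
    by (cases "m = 0") auto
qed

lemma frob_lift:
  fixes \<phi> :: "'a::comm_ring_1 \<Rightarrow> 'a"
  assumes add: "\<And>x y. \<phi> (x + y) = \<phi> x + \<phi> y"
    and mult: "\<And>x y. \<phi> (x * y) = \<phi> x * \<phi> y"
    and one: "\<phi> 1 = 1"
    and H1: "\<And>y. (3::'a) dvd (\<phi> y - y ^ 3)"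
    and H2: "\<And>y. (3::'a) dvd (y ^ (3 ^ N) - y)"
    and N: "N \<ge> 1" and m: "m \<ge> 1"
  shows "\<exists>w. (3::'a) ^ m dvd (\<phi> a - a * w)"
proof -
  have zero: "\<phi> 0 = 0" using add[of 0 0] by simp
  have minus: "\<phi> (x - y) = \<phi> x - \<phi> y" for x y
    using add[of "x - y" y] by (simp add: algebra_simps)
  have three: "\<phi> 3 = 3"
  proof -
    have "(3::'a) = 1 + 1 + 1" by simp
    then show ?thesis by (simp only: add one)
  qed
  have pw: "\<phi> (x ^ k) = \<phi> x ^ k" for x k
    by (induction k) (simp_all add: one mult)
  have p3: "\<phi> (3 ^ k * t) = 3 ^ k * \<phi> t" for k t
    by (simp add: mult pw three)
  have dvd_phi: "(3::'a) ^ k dvd \<phi> z" if H: "(3::'a) ^ k dvd z" for k z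
  proof -
    obtain t where "z = 3 ^ k * t" using H unfolding dvd_def by blast
    then show ?thesis using p3 by simp
  qed
  have N3: "(3::nat) ^ N \<ge> 3"
  proof -
    have "(3::nat) ^ 1 \<le> 3 ^ N" using N by (rule power_increasing) simp
    then show ?thesis by simp
  qed
  have main: "\<forall>c. \<exists>w. (3::'a) ^ m dvd (\<phi> (3 ^ (m - k) * c) - 3 ^ (m - k) * c * w)"
    if "k \<le> m" for k
    using that
  proof (induction k)
    case 0
    show ?case by (simp add: p3)
  next
    case (Suc k)
    define j where "j = m - Suc k"
    have mk: "m - k = j + 1" using Suc.prems unfolding j_def by simp
    show ?case
    proof
      fix c :: 'a
      define \<epsilon> where "\<epsilon> = c ^ (3 ^ N - 1)"
      have eps2: "(3::'a) dvd (\<epsilon> * \<epsilon> - \<epsilon>)"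
      proof -
        have "\<epsilon> * \<epsilon> - \<epsilon> = c ^ (3 ^ N - 2) * (c ^ (3 ^ N) - c)"
        proof -
          have ex: "(3::nat) ^ N - 2 + 3 ^ N = (3 ^ N - 1) + (3 ^ N - 1)" using N3 by linarith
          have "c ^ (3 ^ N - 2) * c ^ (3 ^ N) = c ^ (3 ^ N - 2 + 3 ^ N)" by (simp only: power_add)
          also have "\<dots> = c ^ ((3 ^ N - 1) + (3 ^ N - 1))" by (simp only: ex)
          also have "\<dots> = \<epsilon> * \<epsilon>" unfolding \<epsilon>_def by (simp only: power_add)
          finally have "c ^ (3 ^ N - 2) * c ^ (3 ^ N) = \<epsilon> * \<epsilon>" .
          moreover have "c ^ (3 ^ N - 2) * c = \<epsilon>"
          proof -
            have "(3::nat) ^ N - 1 = Suc (3 ^ N - 2)" using N3 by simp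
            then show ?thesis unfolding \<epsilon>_def by (simp only: power_Suc2)
          qed
          ultimately show ?thesis by (simp add: algebra_simps)
        qed
        then show ?thesis using H2[of c] by simp
      qed
      define e where "e = \<epsilon> ^ (3 ^ (m - 1))"
      have ee: "(3::'a) ^ m dvd (e * e - e)"
      proof -
        have "(3::'a) ^ (m - 1 + 1) dvd ((\<epsilon> * \<epsilon>) ^ (3 ^ (m - 1)) - \<epsilon> ^ (3 ^ (m - 1)))"
          by (rule iter_lift[OF eps2])
        then show ?thesis using m unfolding e_def by (simp add: power_mult_distrib)
      qed
      have epow: "(3::'a) dvd (\<epsilon> ^ Suc i - \<epsilon>)" for i
      proof (induction i)
        case 0 then show ?case by simp
      next
        case (Suc i)
        have eq: "\<epsilon> ^ Suc (Suc i) - \<epsilon> = \<epsilon> * (\<epsilon> ^ Suc i - \<epsilon>) + (\<epsilon> * \<epsilon> - \<epsilon>)"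
          by (simp add: algebra_simps)
        have A: "(3::'a) dvd \<epsilon> * (\<epsilon> ^ Suc i - \<epsilon>)" using Suc by (rule dvd_mult)
        show ?case unfolding eq using A eps2 by (rule dvd_add)
      qed
      have e_eps: "(3::'a) dvd (e - \<epsilon>)"
      proof -
        have "(3::nat) ^ (m - 1) = Suc (3 ^ (m - 1) - 1)" by simp
        then have "e = \<epsilon> ^ Suc (3 ^ (m - 1) - 1)" unfolding e_def by (simp only:)
        then show ?thesis using epow[of "3 ^ (m - 1) - 1"] by (simp only:)
      qed
      define K :: nat where "K = (3 ^ N - 1) * 3 ^ (m - 1)"
      have K1: "K \<ge> 1" unfolding K_def using N3 by simp
      define d where "d = c ^ (K - 1)"
      have cd: "c * d = e"
        unfolding d_def e_def \<epsilon>_def power_mult[symmetric] K_def[symmetric]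
      proof -
        have "K = Suc (K - 1)" using K1 by simp
        then have "c ^ K = c * c ^ (K - 1)" by (metis power_Suc)
        then show "c * c ^ (K - 1) = c ^ K" by simp
      qed
      have phie: "(3::'a) ^ m dvd (\<phi> e - e)"
      proof (rule idem_unique)
        show "(3::'a) ^ m dvd (e * e - e)" by (rule ee)
        have "\<phi> e * \<phi> e - \<phi> e = \<phi> (e * e - e)" by (simp add: minus mult)
        then show "(3::'a) ^ m dvd (\<phi> e * \<phi> e - \<phi> e)" using dvd_phi[OF ee] by simp
        have eq: "\<phi> e - e = (\<phi> e - e ^ 3) + (e + 1) * (e * e - e)"
          by (simp add: algebra_simps power3_eq_cube)
        have e3: "(3::'a) dvd (e * e - e)"
        proof -
          have "(3::'a) ^ m = 3 * 3 ^ (m - 1)" using m by (simp add: power_eq_if)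
          then show ?thesis using ee by (metis dvd_mult_left)
        qed
        show "(3::'a) dvd (\<phi> e - e)" unfolding eq
          using H1[of e] dvd_mult[OF e3, of "e + 1"] by (rule dvd_add)
      qed
      have one_e: "(3::'a) dvd ((1 - e) * c)"
      proof -
        have ec: "\<epsilon> * c = c ^ (3 ^ N)"
        proof -
          have "(3::nat) ^ N = Suc (3 ^ N - 1)" using N3 by simp
          then have "c ^ (3 ^ N) = c ^ (3 ^ N - 1) * c" by (metis power_Suc2)
          then show ?thesis unfolding \<epsilon>_def by simp
        qed
        have "(1 - e) * c = (c - c ^ (3 ^ N)) + (\<epsilon> - e) * c"
          using ec by (simp add: algebra_simps)
        moreover have "(3::'a) dvd (c - c ^ (3 ^ N))"
        proof -
          have "c - c ^ (3 ^ N) = - (c ^ (3 ^ N) - c)" by simp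
          then show ?thesis using H2[of c] by (simp only: dvd_minus_iff)
        qed
        moreover have "(3::'a) dvd ((\<epsilon> - e) * c)"
        proof -
          have "(\<epsilon> - e) * c = - ((e - \<epsilon>) * c)" by (simp add: algebra_simps)
          then show ?thesis using dvd_mult2[OF e_eps, of c] by (simp only: dvd_minus_iff)
        qed
        ultimately show ?thesis by (simp add: dvd_add)
      qed
      then obtain c' where c': "(1 - e) * c = 3 * c'" by (auto elim: dvdE)
      obtain w1 where w1: "(3::'a) ^ m dvd (\<phi> (3 ^ (m - k) * c') - 3 ^ (m - k) * c' * w1)"
        using Suc.IH Suc.prems by auto
      have c'': "3 ^ (m - k) * c' = 3 ^ j * ((1 - e) * c)"
        unfolding mk c' by simp
      define w where "w = e * d * \<phi> c + (1 - e) * w1"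
      have split: "\<phi> (3 ^ j * c) - 3 ^ j * c * w =
          (\<phi> (3 ^ j * (e * c)) - 3 ^ j * c * (e * d * \<phi> c)) +
          (\<phi> (3 ^ j * ((1 - e) * c)) - 3 ^ j * ((1 - e) * c) * w1)"
      proof -
        have "3 ^ j * c = 3 ^ j * (e * c) + 3 ^ j * ((1 - e) * c)" by (simp add: algebra_simps)
        then have "\<phi> (3 ^ j * c) = \<phi> (3 ^ j * (e * c)) + \<phi> (3 ^ j * ((1 - e) * c))"
          by (metis add)
        then show ?thesis unfolding w_def by (simp add: algebra_simps)
      qed
      have P1: "(3::'a) ^ m dvd (\<phi> (3 ^ j * (e * c)) - 3 ^ j * c * (e * d * \<phi> c))"
      proof -
        have "\<phi> (3 ^ j * (e * c)) - 3 ^ j * c * (e * d * \<phi> c)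
            = 3 ^ j * \<phi> c * ((\<phi> e - e) - (e * e - e))"
        proof -
          have a1: "\<phi> (3 ^ j * (e * c)) = 3 ^ j * \<phi> e * \<phi> c" by (simp add: mult pw three)
          have "3 ^ j * c * (e * d * \<phi> c) = 3 ^ j * e * (c * d) * \<phi> c" by (simp add: ac_simps)
          then have a2: "3 ^ j * c * (e * d * \<phi> c) = 3 ^ j * e * e * \<phi> c" unfolding cd by simp
          show ?thesis unfolding a1 a2 by (simp add: algebra_simps)
        qed
        moreover have "(3::'a) ^ m dvd ((\<phi> e - e) - (e * e - e))"
          using phie ee by (rule dvd_diff)
        ultimately show ?thesis by simp
      qed
      have P2: "(3::'a) ^ m dvd (\<phi> (3 ^ j * ((1 - e) * c)) - 3 ^ j * ((1 - e) * c) * w1)"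
        using w1 c'' by simp
      have "(3::'a) ^ m dvd (\<phi> (3 ^ j * c) - 3 ^ j * c * w)"
        unfolding split using P1 P2 by (simp add: dvd_add)
      then show "\<exists>w. (3::'a) ^ m dvd (\<phi> (3 ^ (m - Suc k) * c) - 3 ^ (m - Suc k) * c * w)"
        unfolding j_def by blast
    qed
  qed
  from main[of m] show ?thesis by simp
qed

type_synonym G = "143"
type_synonym R = "G \<Rightarrow>\<^sub>0 int"

definition el :: "(G \<Rightarrow> int) \<Rightarrow> R" where "el f = Abs_poly_mapping f"

lemma lookup_el [simp]: "poly_mapping.lookup (el f) = f"
  unfolding el_def by (rule lookup_Abs_poly_mapping) simp

lemma lookup_times_G: "poly_mapping.lookup (F * H) k = (\<Sum>l\<in>UNIV. poly_mapping.lookup F l * poly_mapping.lookup H (k - l))"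
  for F H :: R
proof -
  have inner: "(\<Sum>q. poly_mapping.lookup H q when k = l + q) = poly_mapping.lookup H (k - l)" for l
  proof -
    have "(\<lambda>q. poly_mapping.lookup H q when k = l + q) = (\<lambda>q. if q = k - l then poly_mapping.lookup H q else 0)"
      by (auto simp: fun_eq_iff when_def algebra_simps)
    then show ?thesis by (simp only: Sum_any.delta)
  qed
  have "poly_mapping.lookup (F * H) k = (\<Sum>l. poly_mapping.lookup F l * poly_mapping.lookup H (k - l))"
    unfolding lookup_mult inner ..
  also have "\<dots> = (\<Sum>l\<in>UNIV. poly_mapping.lookup F l * poly_mapping.lookup H (k - l))"
    by (rule Sum_any.expand_superset) auto
  finally show ?thesis .
qed

lemma R_eqI: "(\<And>k. poly_mapping.lookup F k = poly_mapping.lookup H k) \<Longrightarrow> F = H" for F H :: R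
  by (rule poly_mapping_eqI)

definition mm :: "G \<Rightarrow> R \<Rightarrow> R" where "mm u F = el (\<lambda>y. poly_mapping.lookup F (u * y))"

lemma lookup_mm [simp]: "poly_mapping.lookup (mm u F) y = poly_mapping.lookup F (u * y)"
  by (simp add: mm_def)

lemma mm_add: "mm u (F + H) = mm u F + mm u H"
  by (rule R_eqI) (simp add: lookup_add)

lemma mm_mult:
  assumes uv: "u * v = 1"
  shows "mm u (F * H) = mm u F * mm u H"
proof (rule R_eqI)
  fix y
  have "poly_mapping.lookup (mm u F * mm u H) y = (\<Sum>l\<in>UNIV. poly_mapping.lookup F (u * l) * poly_mapping.lookup H (u * (y - l)))"
    by (simp add: lookup_times_G)
  also have "\<dots> = (\<Sum>l\<in>UNIV. poly_mapping.lookup F l * poly_mapping.lookup H (u * y - l))"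
    by (rule sum.reindex_bij_witness[where i="\<lambda>l. v * l" and j="\<lambda>l. u * l"])
       (auto simp: algebra_simps uv mult.assoc[symmetric])
  also have "\<dots> = poly_mapping.lookup (mm u (F * H)) y"
    by (simp add: lookup_times_G)
  finally show "poly_mapping.lookup (mm u (F * H)) y = poly_mapping.lookup (mm u F * mm u H) y" ..
qed

lemma mm_one:
  assumes uv: "u * v = 1"
  shows "mm u 1 = 1"
proof (rule R_eqI)
  fix y
  have "u * y = 0 \<longleftrightarrow> y = 0"
  proof
    assume "u * y = 0" then have "v * (u * y) = 0" by simp
    then show "y = 0" using uv by (simp add: mult.assoc[symmetric] mult.commute)
  qed simp
  then show "poly_mapping.lookup (mm u 1) y = poly_mapping.lookup 1 y" by (simp add: lookup_one when_def)
qed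

lemma mm_numeral:
  assumes uv: "u * v = 1"
  shows "mm u (numeral n) = numeral n"
proof (rule R_eqI)
  fix y
  have "u * y = 0 \<longleftrightarrow> y = 0"
  proof
    assume "u * y = 0" then have "v * (u * y) = 0" by simp
    then show "y = 0" using uv by (simp add: mult.assoc[symmetric] mult.commute)
  qed simp
  then show "poly_mapping.lookup (mm u (numeral n)) y = poly_mapping.lookup (numeral n) y" by (simp add: lookup_numeral when_def)
qed

lemma mm_mm: "mm u (mm v F) = mm (v * u) F"
  by (rule R_eqI) (simp add: mult.assoc)

lemma mm_1: "mm 1 F = F"
  by (rule R_eqI) simp

lemma lookup_numeral_times: "poly_mapping.lookup (numeral n * F) k = numeral n * poly_mapping.lookup F k" for F :: R
proof -
  have "poly_mapping.lookup (numeral n * F) k = (\<Sum>l\<in>UNIV. (numeral n when l = 0) * poly_mapping.lookup F (k - l))"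
    by (simp add: lookup_times_G lookup_numeral)
  also have "\<dots> = (\<Sum>l\<in>UNIV. if l = 0 then numeral n * poly_mapping.lookup F (k - l) else 0)"
    by (rule sum.cong) (auto simp: when_def)
  also have "\<dots> = numeral n * poly_mapping.lookup F k" by simp
  finally show ?thesis .
qed

lemma single_mult_lookup: "poly_mapping.lookup (Poly_Mapping.single g c * F) k = c * poly_mapping.lookup F (k - g)" for F :: R
proof -
  have "poly_mapping.lookup (Poly_Mapping.single g c * F) k = (\<Sum>l\<in>UNIV. (c when g = l) * poly_mapping.lookup F (k - l))"
    by (simp add: lookup_times_G lookup_single)
  also have "\<dots> = (\<Sum>l\<in>UNIV. if l = g then c * poly_mapping.lookup F (k - l) else 0)"
    by (rule sum.cong) (auto simp: when_def)
  also have "\<dots> = c * poly_mapping.lookup F (k - g)" by simp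
  finally show ?thesis .
qed

lemma sum_single: "F = (\<Sum>x\<in>UNIV. Poly_Mapping.single x (poly_mapping.lookup F x))" for F :: R
proof (rule R_eqI)
  fix k
  have "poly_mapping.lookup (\<Sum>x\<in>UNIV. Poly_Mapping.single x (poly_mapping.lookup F x)) k
      = (\<Sum>x\<in>UNIV. if x = k then poly_mapping.lookup F x else 0)"
    by (simp add: lookup_sum lookup_single when_def)
  also have "\<dots> = poly_mapping.lookup F k" by simp
  finally show "poly_mapping.lookup F k = poly_mapping.lookup (\<Sum>x\<in>UNIV. Poly_Mapping.single x (poly_mapping.lookup F x)) k" ..
qed

lemma int_cube_mod3: "(3::int) dvd (c ^ 3 - c)"
proof -
  define d r where "d = c div 3" and "r = c mod 3"
  have c: "c = 3 * d + r" unfolding d_def r_def by simp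
  have r: "r = 0 \<or> r = 1 \<or> r = 2" unfolding r_def by auto
  have "c ^ 3 - c = 3 * (9 * d^3 + 9 * d^2 * r + 3 * d * r^2 - d) + (r ^ 3 - r)"
    unfolding c by (simp add: algebra_simps power2_eq_square power3_eq_cube)
  moreover have "(3::int) dvd (r ^ 3 - r)" using r by auto
  ultimately show ?thesis by simp
qed

definition phi :: "R \<Rightarrow> R" where "phi = mm 48"

lemma u48: "(48::G) * 3 = 1" by simp
lemma u3: "(3::G) * 48 = 1" by simp

lemma phi_single: "phi (Poly_Mapping.single x c) = Poly_Mapping.single (3 * x) c"
proof (rule R_eqI)
  fix y
  have "x = 48 * y \<longleftrightarrow> 3 * x = y"
  proof
    assume "x = 48 * y" then show "3 * x = y" by (simp only: mult.assoc[symmetric] u3 mult_1)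
  next
    assume "3 * x = y"
    then have "48 * y = 48 * (3 * x)" by simp
    also have "\<dots> = x" by (simp only: mult.assoc[symmetric] u48 mult_1)
    finally show "x = 48 * y" by simp
  qed
  then show "poly_mapping.lookup (phi (Poly_Mapping.single x c)) y = poly_mapping.lookup (Poly_Mapping.single (3 * x) c) y"
    by (simp add: phi_def lookup_single when_def)
qed

lemma cube_single: "(Poly_Mapping.single x c :: R) ^ 3 = Poly_Mapping.single (3 * x) (c ^ 3)"
  by (simp add: power3_eq_cube mult_single algebra_simps)

lemma three_single: "(3::R) * Poly_Mapping.single x c = Poly_Mapping.single x (3 * c)"
proof -
  have "(3::R) * Poly_Mapping.single x c = Poly_Mapping.single 0 3 * Poly_Mapping.single x c" by simp
  also have "\<dots> = Poly_Mapping.single x (3 * c)" by (simp only: mult_single) simp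
  finally show ?thesis .
qed

lemma phi_add: "phi (F + H) = phi F + phi H" by (simp add: phi_def mm_add)
lemma phi_mult: "phi (F * H) = phi F * phi H" by (simp add: phi_def mm_mult[OF u48])
lemma phi_one: "phi 1 = 1" by (simp add: phi_def mm_one[OF u48])

lemma H1: "(3::R) dvd (phi Y - Y ^ 3)"
proof -
  have "(3::R) dvd (phi (\<Sum>x\<in>A. Poly_Mapping.single x (poly_mapping.lookup Y x)) - (\<Sum>x\<in>A. Poly_Mapping.single x (poly_mapping.lookup Y x)) ^ 3)"
    if "finite A" for A
    using that
  proof (induction A rule: finite_induct)
    case empty
    have "phi 0 = 0" using phi_add[of 0 0] by simp
    then show ?case by simp
  next
    case (insert x A)
    define S where "S = (\<Sum>x\<in>A. Poly_Mapping.single x (poly_mapping.lookup Y x))"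
    define M where "M = Poly_Mapping.single x (poly_mapping.lookup Y x)"
    have sum: "(\<Sum>x\<in>insert x A. Poly_Mapping.single x (poly_mapping.lookup Y x)) = M + S"
      using insert unfolding S_def M_def by simp
    obtain t where t: "poly_mapping.lookup Y x - poly_mapping.lookup Y x ^ 3 = 3 * t"
      using int_cube_mod3[of "poly_mapping.lookup Y x"] by (metis dvdE dvd_minus_iff minus_diff_eq)
    have M: "phi M - M ^ 3 = 3 * Poly_Mapping.single (3 * x) t"
      unfolding M_def phi_single cube_single three_single t[symmetric]
      by (simp add: single_diff)
    have "phi (M + S) - (M + S) ^ 3 = (phi M - M ^ 3) + (phi S - S ^ 3) - 3 * (M * M * S + M * S * S)"
      by (simp add: phi_add algebra_simps power3_eq_cube)
    moreover have "(3::R) dvd (phi M - M ^ 3)" unfolding M by simp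
    moreover have "(3::R) dvd (phi S - S ^ 3)" using insert unfolding S_def by simp
    ultimately show ?case unfolding sum by (simp add: dvd_add dvd_diff)
  qed
  from this[of UNIV] show ?thesis using sum_single[of Y] by simp
qed

lemma phi_diff: "phi (F - H) = phi F - phi H"
  using phi_add[of "F - H" H] by (simp add: algebra_simps)

lemma phi_pow: "phi (F ^ k) = phi F ^ k"
  by (induction k) (simp_all add: phi_one phi_mult)

lemma phi_numeral: "phi (numeral n) = numeral n"
  by (simp add: phi_def mm_numeral[OF u48])

lemma phi_dvd3: "(3::R) dvd Z \<Longrightarrow> (3::R) dvd phi Z"
proof -
  assume "(3::R) dvd Z"
  then obtain t where "Z = 3 * t" unfolding dvd_def by blast
  then have "phi Z = 3 * phi t" by (simp add: phi_mult phi_numeral)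
  then show ?thesis by simp
qed

lemma phi_iter: "(phi ^^ k) F = mm (48 ^ k) F"
proof (induction k)
  case 0 then show ?case by (simp add: mm_1)
next
  case (Suc k)
  then show ?case by (simp add: phi_def mm_mm mult.commute)
qed

lemma phi15: "(phi ^^ 15) F = F"
proof -
  have "(48::G) ^ 15 = 1" by simp
  then show ?thesis by (simp only: phi_iter mm_1)
qed

lemma phi_iter_cong: "(3::R) dvd ((phi ^^ k) Y - Y ^ (3 ^ k))"
proof (induction k)
  case 0 then show ?case by simp
next
  case (Suc k)
  define Z where "Z = (phi ^^ k) Y"
  have A: "(3::R) dvd phi (Z - Y ^ (3 ^ k))" using Suc unfolding Z_def by (rule phi_dvd3)
  have B: "(3::R) dvd (phi Y ^ (3 ^ k) - (Y ^ 3) ^ (3 ^ k))" by (rule pow_cong3[OF H1])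
  have "(phi ^^ Suc k) Y - Y ^ (3 ^ Suc k) = phi (Z - Y ^ (3 ^ k)) + (phi Y ^ (3 ^ k) - (Y ^ 3) ^ (3 ^ k))"
    by (simp add: Z_def phi_diff phi_pow power_mult[symmetric] mult.commute)
  then show ?case using A B by (simp add: dvd_add)
qed

lemma H2: "(3::R) dvd (Y ^ (3 ^ 15) - Y)"
proof -
  have "(3::R) dvd ((phi ^^ 15) Y - Y ^ (3 ^ 15))" by (rule phi_iter_cong)
  then have "(3::R) dvd (Y - Y ^ (3 ^ 15))" by (simp only: phi15)
  then show ?thesis by (metis dvd_minus_iff minus_diff_eq)
qed

lemma multiplier_mod81: "\<exists>w. (81::R) dvd (phi A - A * w)"
proof -
  have "\<exists>w. (3::R) ^ 4 dvd (phi A - A * w)"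
    by (rule frob_lift[where N=15, OF phi_add phi_mult phi_one H1 H2]) simp_all
  then show ?thesis by simp
qed

lemma int_sq_ge1: "(x::int) \<noteq> 0 \<Longrightarrow> x * x \<ge> 1"
proof -
  assume "x \<noteq> 0"
  then have a: "\<bar>x\<bar> \<ge> 1" by simp
  have "\<bar>x\<bar> * \<bar>x\<bar> \<ge> 1 * 1" using a by (intro mult_mono) auto
  then show ?thesis by (simp add: abs_mult[symmetric])
qed

lemma int_sq_eq1: "(x::int) * x = 1 \<Longrightarrow> x = 1 \<or> x = -1"
proof -
  assume h: "x * x = 1"
  have "\<bar>x\<bar> \<le> 1"
  proof (rule ccontr)
    assume "\<not> \<bar>x\<bar> \<le> 1"
    then have a: "\<bar>x\<bar> \<ge> 2" by simp
    have "\<bar>x\<bar> * \<bar>x\<bar> \<ge> 2 * 2" using a by (intro mult_mono) auto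
    then show False using h by (simp add: abs_mult[symmetric])
  qed
  moreover have "x \<noteq> 0" using h by auto
  ultimately show ?thesis by auto
qed

lemma sq_one:
  fixes u :: "'b \<Rightarrow> int"
  assumes fin: "finite A" and s: "(\<Sum>l\<in>A. u l * u l) = 1"
  shows "\<exists>g\<in>A. (u g = 1 \<or> u g = -1) \<and> (\<forall>l\<in>A. l \<noteq> g \<longrightarrow> u l = 0)"
proof -
  obtain g where g: "g \<in> A" "u g \<noteq> 0"
  proof -
    have "\<not> (\<forall>l\<in>A. u l = 0)"
    proof
      assume "\<forall>l\<in>A. u l = 0" then have "(\<Sum>l\<in>A. u l * u l) = 0" by simp
      then show False using s by simp
    qed
    then show ?thesis using that by blast
  qed
  have split: "(\<Sum>l\<in>A. u l * u l) = u g * u g + (\<Sum>l\<in>A - {g}. u l * u l)"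
    using fin g(1) by (rule sum.remove)
  have nn: "(\<Sum>l\<in>A - {g}. u l * u l) \<ge> 0" by (intro sum_nonneg) simp
  have ge: "u g * u g \<ge> 1" using g(2) by (rule int_sq_ge1)
  have ug: "u g * u g = 1" and rest: "(\<Sum>l\<in>A - {g}. u l * u l) = 0"
    using split s nn ge by linarith+
  have "\<forall>l\<in>A - {g}. u l * u l = 0"
    using rest by (subst (asm) sum_nonneg_eq_0_iff) (use fin in auto)
  then have "\<forall>l\<in>A. l \<noteq> g \<longrightarrow> u l = 0" by auto
  then show ?thesis using g(1) int_sq_eq1[OF ug] by blast
qed

definition st :: "R \<Rightarrow> R" where "st = mm (-1)"

lemma um: "(-1::G) * -1 = 1" by simp

lemma st_mult: "st (F * H) = st F * st H" by (simp add: st_def mm_mult[OF um])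
lemma st_add: "st (F + H) = st F + st H" by (simp add: st_def mm_add)
lemma st_numeral: "st (numeral n) = numeral n" by (simp add: st_def mm_numeral[OF um])
lemma st_st: "st (st F) = F" by (simp add: st_def mm_mm mm_1)
lemma st_phi: "st (phi F) = phi (st F)" by (simp add: st_def phi_def mm_mm mult.commute)
lemma lookup_st [simp]: "poly_mapping.lookup (st F) y = poly_mapping.lookup F (- y)" by (simp add: st_def)

lemma numeral_cancel: "(numeral n :: R) * X = numeral n * Y \<Longrightarrow> X = Y"
proof -
  assume h: "(numeral n :: R) * X = numeral n * Y"
  show "X = Y"
  proof (rule R_eqI)
    fix k
    have "poly_mapping.lookup (numeral n * X) k = poly_mapping.lookup (numeral n * Y) k" using h by simp
    then show "poly_mapping.lookup X k = poly_mapping.lookup Y k" by (simp add: lookup_numeral_times)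
  qed
qed

lemma multiplier:
  fixes f :: "G \<Rightarrow> int"
  assumes AC: "\<And>k. (\<Sum>l\<in>UNIV. f l * f (l - k)) = (if k = 0 then 81 else 0)"
  shows "\<exists>g \<epsilon>. (\<epsilon> = 1 \<or> \<epsilon> = -1) \<and> (\<forall>y. f (48 * y) = \<epsilon> * f (y - g))"
proof -
  define \<alpha> where "\<alpha> = el f"
  have AA: "\<alpha> * st \<alpha> = 81"
  proof (rule R_eqI)
    fix k
    have "poly_mapping.lookup (\<alpha> * st \<alpha>) k = (\<Sum>l\<in>UNIV. f l * f (l - k))"
      by (simp add: \<alpha>_def lookup_times_G)
    also have "\<dots> = poly_mapping.lookup 81 k" by (simp add: AC lookup_numeral when_def)
    finally show "poly_mapping.lookup (\<alpha> * st \<alpha>) k = poly_mapping.lookup 81 k" .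
  qed
  obtain w where "(81::R) dvd (phi \<alpha> - \<alpha> * w)" using multiplier_mod81 by blast
  then obtain t where t: "phi \<alpha> - \<alpha> * w = 81 * t" unfolding dvd_def by blast
  define U where "U = w + t * st \<alpha>"
  define T where "T = phi \<alpha> * st \<alpha>"
  have T81: "T = 81 * U"
  proof -
    have "phi \<alpha> = \<alpha> * w + 81 * t" using t by (simp add: algebra_simps)
    then have "T = (\<alpha> * st \<alpha>) * w + 81 * t * st \<alpha>" unfolding T_def by (simp add: algebra_simps)
    then show ?thesis unfolding AA U_def by (simp add: algebra_simps)
  qed
  have TT: "T * st T = 81 * 81"
  proof -
    have "st T = phi (st \<alpha>) * \<alpha>" unfolding T_def by (simp add: st_mult st_phi st_st)
    then have "T * st T = phi (\<alpha> * st \<alpha>) * (\<alpha> * st \<alpha>)"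
      unfolding T_def by (simp add: phi_mult algebra_simps)
    then show ?thesis unfolding AA by (simp add: phi_numeral)
  qed
  have "st T = 81 * st U" unfolding T81 by (simp add: st_mult st_numeral)
  then have "(81 * 81 :: R) * (U * st U) = 81 * 81 * 1" using TT unfolding T81 by (simp add: algebra_simps)
  then have "(6561::R) * (U * st U) = 6561 * 1" by simp
  then have UU: "U * st U = 1" by (rule numeral_cancel)
  have "(\<Sum>l\<in>UNIV. poly_mapping.lookup U l * poly_mapping.lookup U l) = 1"
  proof -
    have "poly_mapping.lookup (U * st U) 0 = 1" unfolding UU by simp
    then show ?thesis by (simp add: lookup_times_G)
  qed
  then obtain g where g: "poly_mapping.lookup U g = 1 \<or> poly_mapping.lookup U g = -1"
    and g0: "\<forall>l. l \<noteq> g \<longrightarrow> poly_mapping.lookup U l = 0"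
    using sq_one[of UNIV "poly_mapping.lookup U"] by auto
  define \<epsilon> where "\<epsilon> = poly_mapping.lookup U g"
  have Us: "U = Poly_Mapping.single g \<epsilon>"
  proof (rule R_eqI)
    fix k show "poly_mapping.lookup U k = poly_mapping.lookup (Poly_Mapping.single g \<epsilon>) k"
      using g0 by (cases "k = g") (auto simp: lookup_single \<epsilon>_def when_def)
  qed
  have "phi \<alpha> * 81 = 81 * (Poly_Mapping.single g \<epsilon> * \<alpha>)"
  proof -
    have "phi \<alpha> * 81 = T * \<alpha>" unfolding T_def AA[symmetric] by (simp add: algebra_simps)
    then show ?thesis unfolding T81 Us by (simp add: algebra_simps)
  qed
  then have "(81::R) * phi \<alpha> = 81 * (Poly_Mapping.single g \<epsilon> * \<alpha>)" by (simp add: mult.commute)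
  then have pa: "phi \<alpha> = Poly_Mapping.single g \<epsilon> * \<alpha>" by (rule numeral_cancel)
  have "\<forall>y. f (48 * y) = \<epsilon> * f (y - g)"
  proof
    fix y
    have "poly_mapping.lookup (phi \<alpha>) y = poly_mapping.lookup (Poly_Mapping.single g \<epsilon> * \<alpha>) y"
      using pa by simp
    then show "f (48 * y) = \<epsilon> * f (y - g)"
      by (simp add: phi_def \<alpha>_def single_mult_lookup)
  qed
  then show ?thesis using g unfolding \<epsilon>_def by blast
qed

lemma Rep_of_nat_G: "Rep_bit1 (of_nat i :: G) = int i mod 143"
  by (simp only: bit1.of_nat_eq bit1.Rep_Abs_mod) simp

lemma z143: "(143::G) = 0" by simp

lemma of_nat_G_inj: "i < 143 \<Longrightarrow> j < 143 \<Longrightarrow> (of_nat i :: G) = of_nat j \<Longrightarrow> i = j"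
proof -
  assume "i < 143" "j < 143" "(of_nat i :: G) = of_nat j"
  then have "int i mod 143 = int j mod 143" by (metis Rep_of_nat_G)
  then show "i = j" using \<open>i < 143\<close> \<open>j < 143\<close> by simp
qed

lemma of_nat_G_surj: "\<exists>i<143. x = (of_nat i :: G)"
proof (cases x rule: bit1_cases)
  case (of_int z)
  then have "x = of_nat (nat z)" by simp
  moreover have "nat z < 143" using of_int by simp
  ultimately show ?thesis by blast
qed

lemma of_nat_G_mod: "(of_nat (n mod 143) :: G) = of_nat n"
proof -
  have e1: "(of_nat (143 * (n div 143) + n mod 143) :: G) = of_nat 143 * of_nat (n div 143) + of_nat (n mod 143)"
    by (simp only: of_nat_add of_nat_mult)
  have e2: "(of_nat 143 :: G) = 0" by simp
  have "(of_nat n :: G) = of_nat (143 * (n div 143) + n mod 143)" by simp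
  also have "\<dots> = of_nat (n mod 143)" unfolding e1 e2 by simp
  finally show ?thesis ..
qed

lemma sum_G: "(\<Sum>x\<in>UNIV. F x) = (\<Sum>i<143. F (of_nat i :: G))"
proof -
  have "bij_betw (of_nat :: nat \<Rightarrow> G) {..<143} UNIV"
  proof -
    have "inj_on (of_nat :: nat \<Rightarrow> G) {..<143}"
      unfolding inj_on_def using of_nat_G_inj by auto
    moreover have "(of_nat :: nat \<Rightarrow> G) ` {..<143} = UNIV"
    proof -
      have "x \<in> (of_nat :: nat \<Rightarrow> G) ` {..<143}" for x
      proof -
        obtain i where "i < 143" "x = of_nat i" using of_nat_G_surj by blast
        then show ?thesis by (intro image_eqI[of _ _ i]) auto
      qed
      then show ?thesis by auto
    qed
    ultimately show ?thesis unfolding bij_betw_def by blast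
  qed
  then show ?thesis by (rule sum.reindex_bij_betw[symmetric])
qed

lemma lt_aux: "(a::nat) < d \<Longrightarrow> b < e \<Longrightarrow> a + b * d < d * e"
proof -
  assume "a < d" "b < e"
  then have "a + b * d < d + b * d" by simp
  also have "\<dots> = (b + 1) * d" by simp
  also have "\<dots> \<le> e * d" using \<open>b < e\<close> by (intro mult_right_mono) auto
  finally show ?thesis by (simp add: mult.commute)
qed

lemma sum_split_nat:
  fixes d e :: nat
  assumes "d > 0"
  shows "(\<Sum>i<d * e. g i) = (\<Sum>c<d. \<Sum>k<e. g (c + d * k))"
proof -
  have "(\<Sum>c<d. \<Sum>k<e. g (c + d * k)) = (\<Sum>(c, k)\<in>{..<d} \<times> {..<e}. g (c + d * k))"
    by (simp add: sum.cartesian_product)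
  also have "\<dots> = (\<Sum>i<d * e. g i)"
    by (rule sum.reindex_bij_witness[where i="\<lambda>i. (i mod d, i div d)" and j="\<lambda>(c, k). c + d * k"])
       (use assms in \<open>auto simp: less_mult_imp_div_less mult.commute lt_aux\<close>)
  finally show ?thesis ..
qed

definition Pj :: "(G \<Rightarrow> int) \<Rightarrow> nat \<Rightarrow> nat \<Rightarrow> G \<Rightarrow> int" where
  "Pj h d e z = (\<Sum>k<e. h (z + of_nat d * of_nat k))"

lemma Pj_shift1:
  assumes de: "d * e = 143" and e: "e > 0"
  shows "Pj h d e (z + of_nat d) = Pj h d e z"
proof -
  obtain e' where e': "e = Suc e'" using e by (cases e) auto
  have z: "(of_nat d * of_nat e :: G) = 0"
  proof -
    have "(of_nat d * of_nat e :: G) = of_nat (d * e)" by simp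
    also have "\<dots> = 0" unfolding de by simp
    finally show ?thesis .
  qed
  have "Pj h d e (z + of_nat d) = (\<Sum>k<Suc e'. h (z + of_nat d * of_nat (Suc k)))"
    unfolding Pj_def e' by (intro sum.cong) (simp_all add: algebra_simps)
  also have "\<dots> = (\<Sum>k<e'. h (z + of_nat d * of_nat (Suc k))) + h (z + of_nat d * of_nat e)"
    unfolding e' by (rule sum.lessThan_Suc)
  also have "\<dots> = (\<Sum>k<e'. h (z + of_nat d * of_nat (Suc k))) + h (z + of_nat d * of_nat 0)"
    using z by simp
  also have "\<dots> = Pj h d e z"
    unfolding Pj_def e' sum.lessThan_Suc_shift by simp
  finally show ?thesis .
qed

lemma Pj_shift:
  assumes de: "d * e = 143" and e: "e > 0"
  shows "Pj h d e (z + of_nat d * of_nat k) = Pj h d e z"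
proof (induction k)
  case 0 then show ?case by simp
next
  case (Suc k)
  have "Pj h d e (z + of_nat d * of_nat (Suc k)) = Pj h d e ((z + of_nat d * of_nat k) + of_nat d)"
    by (rule arg_cong[where f="Pj h d e"]) (simp add: algebra_simps)
  also have "\<dots> = Pj h d e (z + of_nat d * of_nat k)" by (rule Pj_shift1[OF de e])
  also have "\<dots> = Pj h d e z" by (rule Suc)
  finally show ?case .
qed

lemma sum_G_split:
  assumes de: "d * e = 143" and d: "d > 0"
  shows "(\<Sum>x\<in>UNIV. F x) = (\<Sum>c<d. \<Sum>k<e. F (of_nat c + of_nat d * of_nat k :: G))"
proof -
  have "(\<Sum>x\<in>UNIV. F x) = (\<Sum>i<d * e. F (of_nat i :: G))" unfolding de by (rule sum_G)
  also have "\<dots> = (\<Sum>c<d. \<Sum>k<e. F (of_nat (c + d * k)))" by (rule sum_split_nat[OF d])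
  also have "\<dots> = (\<Sum>c<d. \<Sum>k<e. F (of_nat c + of_nat d * of_nat k :: G))" by simp
  finally show ?thesis .
qed

lemma proj:
  assumes de: "d * e = 143" and d: "d > 0" and e: "e > 0"
    and AC: "\<And>k. (\<Sum>x\<in>UNIV. h x * h (x - k)) = (if k = 0 then 81 else 0)"
  shows "(\<Sum>c<d. Pj h d e (of_nat c) * Pj h d e (of_nat c + s))
       = (\<Sum>k<e. if s + of_nat d * of_nat k = 0 then 81 else 0)"
proof -
  have "(\<Sum>c<d. Pj h d e (of_nat c) * Pj h d e (of_nat c + s))
      = (\<Sum>c<d. \<Sum>k<e. h (of_nat c + of_nat d * of_nat k) * Pj h d e (of_nat c + s))"
    by (simp add: Pj_def sum_distrib_right)
  also have "\<dots> = (\<Sum>c<d. \<Sum>k<e. h (of_nat c + of_nat d * of_nat k) *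
                       Pj h d e ((of_nat c + of_nat d * of_nat k) + s))"
  proof -
    have "Pj h d e ((of_nat c + of_nat d * of_nat k) + s) = Pj h d e (of_nat c + s)" for c k
    proof -
      have "Pj h d e ((of_nat c + of_nat d * of_nat k) + s) = Pj h d e ((of_nat c + s) + of_nat d * of_nat k)"
        by (rule arg_cong[where f="Pj h d e"]) (simp add: algebra_simps)
      also have "\<dots> = Pj h d e (of_nat c + s)" by (rule Pj_shift[OF de e])
      finally show ?thesis .
    qed
    then show ?thesis by simp
  qed
  also have "\<dots> = (\<Sum>x\<in>UNIV. h x * Pj h d e (x + s))"
    by (rule sum_G_split[OF de d, symmetric])
  also have "\<dots> = (\<Sum>x\<in>UNIV. \<Sum>k<e. h x * h (x - (- (s + of_nat d * of_nat k))))"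
    by (simp add: Pj_def sum_distrib_left algebra_simps)
  also have "\<dots> = (\<Sum>k<e. \<Sum>x\<in>UNIV. h x * h (x - (- (s + of_nat d * of_nat k))))"
    by (rule sum.swap)
  also have "\<dots> = (\<Sum>k<e. if - (s + of_nat d * of_nat k) = 0 then 81 else 0)"
    by (simp only: AC)
  also have "\<dots> = (\<Sum>k<e. if s + of_nat d * of_nat k = 0 then 81 else 0)"
    by (simp only: neg_equal_0_iff_equal)
  finally show ?thesis .
qed

lemma total_sq:
  fixes h :: "G \<Rightarrow> int"
  assumes AC: "\<And>k. (\<Sum>x\<in>UNIV. h x * h (x - k)) = (if k = 0 then 81 else 0)"
  shows "(\<Sum>x\<in>UNIV. h x) ^ 2 = (81::int)"
proof -
  have "(\<Sum>x\<in>UNIV. h x) ^ 2 = (\<Sum>x\<in>UNIV. \<Sum>y\<in>UNIV. h x * h (y::G))"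
    by (simp add: power2_eq_square sum_product)
  also have "\<dots> = (\<Sum>x\<in>UNIV. \<Sum>t\<in>UNIV. h x * h (x - t))"
  proof (rule sum.cong[OF refl])
    fix x
    show "(\<Sum>y\<in>UNIV. h x * h y) = (\<Sum>t\<in>UNIV. h x * h (x - t))"
      by (rule sum.reindex_bij_witness[where i="\<lambda>t. x - t" and j="\<lambda>y. x - y"]) auto
  qed
  also have "\<dots> = (\<Sum>t\<in>UNIV. \<Sum>x\<in>UNIV. h x * h (x - t))" by (rule sum.swap)
  also have "\<dots> = 81" by (simp add: AC)
  finally show ?thesis .
qed

lemma normalize:
  fixes f :: "G \<Rightarrow> int"
  assumes AC: "\<And>k. (\<Sum>x\<in>UNIV. f x * f (x - k)) = (if k = 0 then 81 else 0)"
  shows "\<exists>h::G \<Rightarrow> int. (\<forall>k. (\<Sum>x\<in>UNIV. h x * h (x - k)) = (if k = 0 then 81 else 0))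
            \<and> (\<forall>x. h (3 * x) = h x) \<and> (\<forall>x. \<exists>y. h x = f y)"
proof -
  obtain g \<epsilon> where eps: "\<epsilon> = 1 \<or> \<epsilon> = -1" and fg: "\<forall>y. f (48 * y) = \<epsilon> * f (y - g)"
    using multiplier[OF AC] by blast
  define t0 where "t0 = 72 * g"
  define h where "h x = f (x + t0)" for x
  have fx: "f x = \<epsilon> * f (3 * x - g)" for x
  proof -
    have e: "48 * (3 * x) = x" by (simp only: mult.assoc[symmetric] u48 mult_1)
    have "f (48 * (3 * x)) = \<epsilon> * f (3 * x - g)" using fg by blast
    then show ?thesis unfolding e .
  qed
  have hx: "h x = \<epsilon> * h (3 * x)" for x
  proof -
    have "3 * (x + t0) - g = 3 * x + t0 + 143 * g" unfolding t0_def by (simp add: algebra_simps)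
    also have "\<dots> = 3 * x + t0" by (simp add: z143)
    finally have eq: "3 * (x + t0) - g = 3 * x + t0" .
    have "h x = \<epsilon> * f (3 * (x + t0) - g)" unfolding h_def by (rule fx)
    also have "\<dots> = \<epsilon> * h (3 * x)" unfolding eq h_def ..
    finally show ?thesis .
  qed
  have iter: "h x = \<epsilon> ^ k * h (3 ^ k * x)" for k x
  proof (induction k)
    case 0 then show ?case by simp
  next
    case (Suc k)
    have "h (3 ^ k * x) = \<epsilon> * h (3 ^ Suc k * x)" using hx[of "3 ^ k * x"] by (simp add: mult.assoc)
    then show ?case using Suc by (simp add: algebra_simps)
  qed
  have ACh: "(\<Sum>x\<in>UNIV. h x * h (x - k)) = (if k = 0 then 81 else 0)" for k
  proof -
    have "(\<Sum>x\<in>UNIV. h x * h (x - k)) = (\<Sum>y\<in>UNIV. f y * f (y - k))"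
      unfolding h_def
      by (rule sum.reindex_bij_witness[where i="\<lambda>y. y - t0" and j="\<lambda>x. x + t0"]) (auto simp: algebra_simps)
    then show ?thesis using AC by simp
  qed
  have e1: "\<epsilon> = 1"
  proof (rule ccontr)
    assume "\<epsilon> \<noteq> 1"
    then have em: "\<epsilon> = -1" using eps by simp
    have p: "(3::G) ^ 15 = 1" by simp
    have "h x = - h x" for x
    proof -
      have "h x = \<epsilon> ^ 15 * h (3 ^ 15 * x)" by (rule iter)
      then show ?thesis unfolding p em by simp
    qed
    then have "h x = 0" for x by (metis neg_equal_zero)
    then show False using ACh[of 0] by simp
  qed
  have "\<forall>x. h (3 * x) = h x" using hx e1 by simp
  moreover have "\<forall>x. \<exists>y. h x = f y" unfolding h_def by blast
  ultimately show ?thesis using ACh by blast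
qed

definition t3 :: "int \<Rightarrow> bool" where "t3 x \<longleftrightarrow> x = -1 \<or> x = 0 \<or> x = 1"

lemma abs_sq_ge: "\<bar>x::int\<bar> \<ge> k \<Longrightarrow> k \<ge> 0 \<Longrightarrow> x * x \<ge> k * k"
proof -
  assume a: "\<bar>x\<bar> \<ge> k" "k \<ge> 0"
  have "\<bar>x\<bar> * \<bar>x\<bar> \<ge> k * k" using a by (intro mult_mono) auto
  then show ?thesis by (simp add: abs_mult[symmetric])
qed

lemma sq_small: "(x::int) * x \<le> 9 \<Longrightarrow> x \<ge> -3 \<and> x \<le> 3"
proof (rule ccontr)
  assume h: "x * x \<le> 9" "\<not> (x \<ge> -3 \<and> x \<le> 3)"
  then have "\<bar>x\<bar> \<ge> 4" by auto
  then have "x * x \<ge> 4 * 4" by (rule abs_sq_ge) simp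
  then show False using h by simp
qed

lemma sq_small16: "(x::int) * x \<le> 16 \<Longrightarrow> x \<ge> -4 \<and> x \<le> 4"
proof (rule ccontr)
  assume h: "x * x \<le> 16" "\<not> (x \<ge> -4 \<and> x \<le> 4)"
  then have "\<bar>x\<bar> \<ge> 5" by auto
  then have "x * x \<ge> 5 * 5" by (rule abs_sq_ge) simp
  then show False using h by simp
qed

lemma bq_contra:
  fixes bq bn :: int
  assumes "bq * bq + bn * bn = 16" "bq + bn = 2 \<or> bq + bn = -2"
  shows False
proof -
  have "bn * bn \<ge> 0" by simp
  then have "bq * bq \<le> 16" using assms(1) by linarith
  then have "bq \<ge> -4 \<and> bq \<le> 4" by (rule sq_small16)
  then have "bq = -4 \<or> bq = -3 \<or> bq = -2 \<or> bq = -1 \<or> bq = 0 \<or> bq = 1 \<or> bq = 2 \<or> bq = 3 \<or> bq = 4"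
    by linarith
  moreover have "bn = 2 - bq \<or> bn = -2 - bq" using assms(2) by linarith
  ultimately show False using assms(1) by (elim disjE) simp_all
qed

lemma cval:
  assumes "t3 q" "t3 r" "t3 r'" "c = q + 5 * (r + r')" "c * c \<le> 27"
  shows "c = -5 \<or> c = -4 \<or> c = -1 \<or> c = 0 \<or> c = 1 \<or> c = 4 \<or> c = 5"
  using assms(1-3) unfolding t3_def apply (elim disjE) using assms(4,5) by simp_all

lemma quad4b:
  fixes c1 c2 c3 c4 :: int
  assumes "c1 = -5 \<or> c1 = -4 \<or> c1 = -1 \<or> c1 = 0 \<or> c1 = 1 \<or> c1 = 4 \<or> c1 = 5"
   "c2 = -5 \<or> c2 = -4 \<or> c2 = -1 \<or> c2 = 0 \<or> c2 = 1 \<or> c2 = 4 \<or> c2 = 5"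
   "c3 = -5 \<or> c3 = -4 \<or> c3 = -1 \<or> c3 = 0 \<or> c3 = 1 \<or> c3 = 4 \<or> c3 = 5"
   "c4 = -5 \<or> c4 = -4 \<or> c4 = -1 \<or> c4 = 0 \<or> c4 = 1 \<or> c4 = 4 \<or> c4 = 5"
    and "c1*c1 + c2*c2 + c3*c3 + c4*c4 = 27"
    and "c1 + c2 + c3 + c4 = 3 \<or> c1 + c2 + c3 + c4 = -3"
    and "2*c1*c2 + 2*c1*c3 + c2*c3 + c2*c2 + c2*c4 + c4*c4 + c1*c4 + 2*c3*c4 = 0"
  shows False
  using assms(1-4) apply (elim disjE) using assms(5-7) by simp_all

lemma small_sq:
  assumes "c = -5 \<or> c = -4 \<or> c = -1 \<or> c = 0 \<or> c = 1 \<or> c = 4 \<or> c = 5" "(c::int) * c \<le> 15"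
  shows "c * c \<le> 1"
  using assms by auto

lemma final_int:
  fixes v0 v1 v2 v4 v5 v7 v10 v11 v13 v20 v22 v26 v29 v44 v77 c0 c1 c2 c3 c4 b0 bq bn :: int
  assumes T: "t3 v0" "t3 v1" "t3 v2" "t3 v4" "t3 v5" "t3 v7" "t3 v10" "t3 v11" "t3 v13"
     "t3 v20" "t3 v22" "t3 v26" "t3 v29" "t3 v44" "t3 v77"
    and dc0: "c0 = v0 + 5 * v13 + 5 * v26"
    and dc1: "c1 = v22 + 5 * (v1 + v29)"
    and dc2: "c2 = v44 + 5 * (v2 + v5)"
    and dc3: "c3 = v77 + 5 * (v4 + v10)"
    and dc4: "c4 = v11 + 5 * (v7 + v20)"
    and db0: "b0 = v0 + 3 * (v11 + v22 + v44 + v77)"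
    and dbq: "bq = v26 + 3 * (v1 + v4 + v5 + v20)"
    and dbn: "bn = v13 + 3 * (v2 + v7 + v10 + v29)"
    and F3: "c0*c0 + 3*(c1*c1 + c2*c2 + c3*c3 + c4*c4) = 81"
    and F4: "b0*b0 + 5*(bq*bq + bn*bn) = 81"
    and F2: "(c0 + 3*(c1+c2+c3+c4)) * (c0 + 3*(c1+c2+c3+c4)) = 81"
    and F5: "c0*c1 + c0*c3 + 2*c1*c2 + 2*c1*c3 + c2*c3 + c2*c2 + c2*c4 + c4*c4 + c1*c4 + 2*c3*c4 = 0"
  shows False
proof -
  define s0 s1 s2 s3 s4 where "s0 = c0*c0" "s1 = c1*c1" "s2 = c2*c2" "s3 = c3*c3" "s4 = c4*c4"
  note sdef = s0_s1_s2_s3_s4_def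
  define X where "X = s1 + s2 + s3 + s4"
  have n1: "s1 \<ge> 0" "s2 \<ge> 0" "s3 \<ge> 0" "s4 \<ge> 0" "s0 \<ge> 0" unfolding sdef by simp_all
  have F3': "s0 + 3*X = 81" using F3 unfolding X_def sdef .
  have F3d: "s0 + 3*s1 + 3*s2 + 3*s3 + 3*s4 = 81" using F3' unfolding X_def by (simp add: algebra_simps)
  have Xn: "X \<ge> 0" using n1 unfolding X_def by linarith
  have cb1: "c1*c1 \<le> 27" using F3d n1 unfolding sdef by linarith
  have cb2: "c2*c2 \<le> 27" using F3d n1 unfolding sdef by linarith
  have cb3: "c3*c3 \<le> 27" using F3d n1 unfolding sdef by linarith
  have cb4: "c4*c4 \<le> 27" using F3d n1 unfolding sdef by linarith
  have C1: "c1 = -5 \<or> c1 = -4 \<or> c1 = -1 \<or> c1 = 0 \<or> c1 = 1 \<or> c1 = 4 \<or> c1 = 5"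
    by (rule cval[OF T(11) T(2) T(13) dc1 cb1])
  have C2: "c2 = -5 \<or> c2 = -4 \<or> c2 = -1 \<or> c2 = 0 \<or> c2 = 1 \<or> c2 = 4 \<or> c2 = 5"
    by (rule cval[OF T(14) T(3) T(5) dc2 cb2])
  have C3: "c3 = -5 \<or> c3 = -4 \<or> c3 = -1 \<or> c3 = 0 \<or> c3 = 1 \<or> c3 = 4 \<or> c3 = 5"
    by (rule cval[OF T(15) T(4) T(7) dc3 cb3])
  have C4: "c4 = -5 \<or> c4 = -4 \<or> c4 = -1 \<or> c4 = 0 \<or> c4 = 1 \<or> c4 = 4 \<or> c4 = 5"
    by (rule cval[OF T(8) T(6) T(10) dc4 cb4])
  have c0v: "(c0 = 0 \<and> v0 = 0) \<or> (c0 = 1 \<and> v0 = 1) \<or> (c0 = -1 \<and> v0 = -1) \<or>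
     (c0 = 5 \<and> v0 = 0) \<or> (c0 = -5 \<and> v0 = 0) \<or> (c0 = 10 \<and> v0 = 0) \<or> (c0 = -10 \<and> v0 = 0) \<or>
     (c0 = 6 \<and> v0 = 1) \<or> (c0 = 4 \<and> v0 = -1) \<or> (c0 = -4 \<and> v0 = 1) \<or> (c0 = -6 \<and> v0 = -1) \<or>
     (c0 = 11 \<and> v0 = 1) \<or> (c0 = 9 \<and> v0 = -1) \<or> (c0 = -9 \<and> v0 = 1) \<or> (c0 = -11 \<and> v0 = -1)"
    using T(1) T(9) T(12) unfolding t3_def dc0 by (elim disjE) simp_all
  have c0c: "c0 = 0 \<or> c0 = 6 \<or> c0 = -6 \<or> (c0 = 9 \<and> v0 = -1) \<or> (c0 = -9 \<and> v0 = 1)"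
  proof -
    have "s0 + 3 * X = 81" by (rule F3')
    then have "c0 * c0 + 3 * X = 81" unfolding sdef .
    then show ?thesis using c0v Xn by (elim disjE) (simp_all, presburger+)
  qed
  have Sid: "c0 + 3*(c1+c2+c3+c4) = b0 + 5*bq + 5*bn"
    unfolding dc0 dc1 dc2 dc3 dc4 db0 dbq dbn by (simp add: algebra_simps)
  consider "c0 = 0" | "c0 = 6 \<or> c0 = -6" | "c0 = 9 \<and> v0 = -1" | "c0 = -9 \<and> v0 = 1"
    using c0c by blast
  then show False
  proof cases
    case 1
    then have X27: "X = 27" using F3' unfolding sdef by simp
    have "(c1+c2+c3+c4) * (c1+c2+c3+c4) = 9" using F2 1 by (simp add: algebra_simps)
    then have s: "c1+c2+c3+c4 = 3 \<or> c1+c2+c3+c4 = -3"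
    proof -
      assume h: "(c1+c2+c3+c4) * (c1+c2+c3+c4) = 9"
      then have "c1+c2+c3+c4 \<ge> -3 \<and> c1+c2+c3+c4 \<le> 3" by (intro sq_small) simp
      then have "c1+c2+c3+c4 \<in> {-3,-2,-1,0,1,2,3}" by auto
      then show ?thesis using h by auto
    qed
    show False
      by (rule quad4b[OF C1 C2 C3 C4 X27[unfolded X_def sdef] s]) (use F5 1 in simp)
  next
    case 2
    then have X15: "X = 15" using F3' unfolding sdef by auto
    have "c1*c1 \<le> 1" by (rule small_sq[OF C1]) (use X15 n1 in \<open>unfold X_def sdef, linarith\<close>)
    moreover have "c2*c2 \<le> 1" by (rule small_sq[OF C2]) (use X15 n1 in \<open>unfold X_def sdef, linarith\<close>)
    moreover have "c3*c3 \<le> 1" by (rule small_sq[OF C3]) (use X15 n1 in \<open>unfold X_def sdef, linarith\<close>)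
    moreover have "c4*c4 \<le> 1" by (rule small_sq[OF C4]) (use X15 n1 in \<open>unfold X_def sdef, linarith\<close>)
    ultimately show False using X15 unfolding X_def sdef by linarith
  next
    case 3
    then have "X = 0" using F3' unfolding sdef by simp
    then have X0: "c1*c1 + c2*c2 + c3*c3 + c4*c4 = 0" unfolding X_def sdef .
    have z1: "c1*c1 = 0" using X0 n1 unfolding sdef by linarith
    have z2: "c2*c2 = 0" using X0 n1 unfolding sdef by linarith
    have z3: "c3*c3 = 0" using X0 n1 unfolding sdef by linarith
    have z4: "c4*c4 = 0" using X0 n1 unfolding sdef by linarith
    have "c1 = 0" using z1 by simp
    have "c2 = 0" using z2 by simp
    have "c3 = 0" using z3 by simp
    have "c4 = 0" using z4 by simp
    have "v22 = 0" using T(11) dc1 \<open>c1 = 0\<close> unfolding t3_def by presburger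
    moreover have "v44 = 0" using T(14) dc2 \<open>c2 = 0\<close> unfolding t3_def by presburger
    moreover have "v77 = 0" using T(15) dc3 \<open>c3 = 0\<close> unfolding t3_def by presburger
    moreover have "v11 = 0" using T(8) dc4 \<open>c4 = 0\<close> unfolding t3_def by presburger
    ultimately have b0: "b0 = -1" using db0 3 by simp
    then have sq: "bq*bq + bn*bn = 16" using F4 by simp
    have sm: "bq + bn = 2" using Sid 3 b0 \<open>c1 = 0\<close> \<open>c2 = 0\<close> \<open>c3 = 0\<close> \<open>c4 = 0\<close> by simp
    show False using bq_contra[OF sq] sm by blast
  next
    case 4
    then have "X = 0" using F3' unfolding sdef by simp
    then have X0: "c1*c1 + c2*c2 + c3*c3 + c4*c4 = 0" unfolding X_def sdef .
    have z1: "c1*c1 = 0" using X0 n1 unfolding sdef by linarith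
    have z2: "c2*c2 = 0" using X0 n1 unfolding sdef by linarith
    have z3: "c3*c3 = 0" using X0 n1 unfolding sdef by linarith
    have z4: "c4*c4 = 0" using X0 n1 unfolding sdef by linarith
    have "c1 = 0" using z1 by simp
    have "c2 = 0" using z2 by simp
    have "c3 = 0" using z3 by simp
    have "c4 = 0" using z4 by simp
    have "v22 = 0" using T(11) dc1 \<open>c1 = 0\<close> unfolding t3_def by presburger
    moreover have "v44 = 0" using T(14) dc2 \<open>c2 = 0\<close> unfolding t3_def by presburger
    moreover have "v77 = 0" using T(15) dc3 \<open>c3 = 0\<close> unfolding t3_def by presburger
    moreover have "v11 = 0" using T(8) dc4 \<open>c4 = 0\<close> unfolding t3_def by presburger
    ultimately have b0: "b0 = 1" using db0 4 by simp
    then have sq: "bq*bq + bn*bn = 16" using F4 by simp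
    have sm: "bq + bn = -2" using Sid 4 b0 \<open>c1 = 0\<close> \<open>c2 = 0\<close> \<open>c3 = 0\<close> \<open>c4 = 0\<close> by simp
    show False using bq_contra[OF sq] sm by blast
  qed
qed

lemma sum11: "(\<Sum>k<(11::nat). g k) = g 0 + g 1 + g 2 + g 3 + g 4 + g 5 + g 6 + g 7 + g 8 + g 9 + g 10"
  by (simp add: numeral_eq_Suc lessThan_Suc ac_simps)

lemma sum13: "(\<Sum>k<(13::nat). g k) = g 0 + g 1 + g 2 + g 3 + g 4 + g 5 + g 6 + g 7 + g 8 + g 9 + g 10 + g 11 + g 12"
  by (simp add: numeral_eq_Suc lessThan_Suc ac_simps)

lemma final_numeric:
  fixes h :: "G \<Rightarrow> int"
  assumes vals: "\<forall>x. h x = -1 \<or> h x = 0 \<or> h x = 1"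
    and orb: "\<forall>x. h (3 * x) = h x"
    and AC: "\<And>k. (\<Sum>x\<in>UNIV. h x * h (x - k)) = (if k = 0 then 81 else 0)"
  shows False
proof -
  have o3: "h 3 = h 1"
  proof -
    have e: "(3::G) * 1 = 3" by simp
    show ?thesis using orb[rule_format, of "1"] unfolding e .
  qed
  have o9: "h 9 = h 3"
  proof -
    have e: "(3::G) * 3 = 9" by simp
    show ?thesis using orb[rule_format, of "3"] unfolding e .
  qed
  have o27: "h 27 = h 9"
  proof -
    have e: "(3::G) * 9 = 27" by simp
    show ?thesis using orb[rule_format, of "9"] unfolding e .
  qed
  have o81: "h 81 = h 27"
  proof -
    have e: "(3::G) * 27 = 81" by simp
    show ?thesis using orb[rule_format, of "27"] unfolding e .
  qed
  have o100: "h 100 = h 81"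
  proof -
    have e: "(3::G) * 81 = 100" by simp
    show ?thesis using orb[rule_format, of "81"] unfolding e .
  qed
  have o14: "h 14 = h 100"
  proof -
    have e: "(3::G) * 100 = 14" by simp
    show ?thesis using orb[rule_format, of "100"] unfolding e .
  qed
  have o42: "h 42 = h 14"
  proof -
    have e: "(3::G) * 14 = 42" by simp
    show ?thesis using orb[rule_format, of "14"] unfolding e .
  qed
  have o126: "h 126 = h 42"
  proof -
    have e: "(3::G) * 42 = 126" by simp
    show ?thesis using orb[rule_format, of "42"] unfolding e .
  qed
  have o92: "h 92 = h 126"
  proof -
    have e: "(3::G) * 126 = 92" by simp
    show ?thesis using orb[rule_format, of "126"] unfolding e .
  qed
  have o133: "h 133 = h 92"
  proof -
    have e: "(3::G) * 92 = 133" by simp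
    show ?thesis using orb[rule_format, of "92"] unfolding e .
  qed
  have o113: "h 113 = h 133"
  proof -
    have e: "(3::G) * 133 = 113" by simp
    show ?thesis using orb[rule_format, of "133"] unfolding e .
  qed
  have o53: "h 53 = h 113"
  proof -
    have e: "(3::G) * 113 = 53" by simp
    show ?thesis using orb[rule_format, of "113"] unfolding e .
  qed
  have o16: "h 16 = h 53"
  proof -
    have e: "(3::G) * 53 = 16" by simp
    show ?thesis using orb[rule_format, of "53"] unfolding e .
  qed
  have o48: "h 48 = h 16"
  proof -
    have e: "(3::G) * 16 = 48" by simp
    show ?thesis using orb[rule_format, of "16"] unfolding e .
  qed
  have o6: "h 6 = h 2"
  proof -
    have e: "(3::G) * 2 = 6" by simp
    show ?thesis using orb[rule_format, of "2"] unfolding e .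
  qed
  have o18: "h 18 = h 6"
  proof -
    have e: "(3::G) * 6 = 18" by simp
    show ?thesis using orb[rule_format, of "6"] unfolding e .
  qed
  have o54: "h 54 = h 18"
  proof -
    have e: "(3::G) * 18 = 54" by simp
    show ?thesis using orb[rule_format, of "18"] unfolding e .
  qed
  have o19: "h 19 = h 54"
  proof -
    have e: "(3::G) * 54 = 19" by simp
    show ?thesis using orb[rule_format, of "54"] unfolding e .
  qed
  have o57: "h 57 = h 19"
  proof -
    have e: "(3::G) * 19 = 57" by simp
    show ?thesis using orb[rule_format, of "19"] unfolding e .
  qed
  have o28: "h 28 = h 57"
  proof -
    have e: "(3::G) * 57 = 28" by simp
    show ?thesis using orb[rule_format, of "57"] unfolding e .
  qed
  have o84: "h 84 = h 28"
  proof -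
    have e: "(3::G) * 28 = 84" by simp
    show ?thesis using orb[rule_format, of "28"] unfolding e .
  qed
  have o109: "h 109 = h 84"
  proof -
    have e: "(3::G) * 84 = 109" by simp
    show ?thesis using orb[rule_format, of "84"] unfolding e .
  qed
  have o41: "h 41 = h 109"
  proof -
    have e: "(3::G) * 109 = 41" by simp
    show ?thesis using orb[rule_format, of "109"] unfolding e .
  qed
  have o123: "h 123 = h 41"
  proof -
    have e: "(3::G) * 41 = 123" by simp
    show ?thesis using orb[rule_format, of "41"] unfolding e .
  qed
  have o83: "h 83 = h 123"
  proof -
    have e: "(3::G) * 123 = 83" by simp
    show ?thesis using orb[rule_format, of "123"] unfolding e .
  qed
  have o106: "h 106 = h 83"
  proof -
    have e: "(3::G) * 83 = 106" by simp
    show ?thesis using orb[rule_format, of "83"] unfolding e .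
  qed
  have o32: "h 32 = h 106"
  proof -
    have e: "(3::G) * 106 = 32" by simp
    show ?thesis using orb[rule_format, of "106"] unfolding e .
  qed
  have o96: "h 96 = h 32"
  proof -
    have e: "(3::G) * 32 = 96" by simp
    show ?thesis using orb[rule_format, of "32"] unfolding e .
  qed
  have o12: "h 12 = h 4"
  proof -
    have e: "(3::G) * 4 = 12" by simp
    show ?thesis using orb[rule_format, of "4"] unfolding e .
  qed
  have o36: "h 36 = h 12"
  proof -
    have e: "(3::G) * 12 = 36" by simp
    show ?thesis using orb[rule_format, of "12"] unfolding e .
  qed
  have o108: "h 108 = h 36"
  proof -
    have e: "(3::G) * 36 = 108" by simp
    show ?thesis using orb[rule_format, of "36"] unfolding e .
  qed
  have o38: "h 38 = h 108"
  proof -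
    have e: "(3::G) * 108 = 38" by simp
    show ?thesis using orb[rule_format, of "108"] unfolding e .
  qed
  have o114: "h 114 = h 38"
  proof -
    have e: "(3::G) * 38 = 114" by simp
    show ?thesis using orb[rule_format, of "38"] unfolding e .
  qed
  have o56: "h 56 = h 114"
  proof -
    have e: "(3::G) * 114 = 56" by simp
    show ?thesis using orb[rule_format, of "114"] unfolding e .
  qed
  have o25: "h 25 = h 56"
  proof -
    have e: "(3::G) * 56 = 25" by simp
    show ?thesis using orb[rule_format, of "56"] unfolding e .
  qed
  have o75: "h 75 = h 25"
  proof -
    have e: "(3::G) * 25 = 75" by simp
    show ?thesis using orb[rule_format, of "25"] unfolding e .
  qed
  have o82: "h 82 = h 75"
  proof -
    have e: "(3::G) * 75 = 82" by simp
    show ?thesis using orb[rule_format, of "75"] unfolding e .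
  qed
  have o103: "h 103 = h 82"
  proof -
    have e: "(3::G) * 82 = 103" by simp
    show ?thesis using orb[rule_format, of "82"] unfolding e .
  qed
  have o23: "h 23 = h 103"
  proof -
    have e: "(3::G) * 103 = 23" by simp
    show ?thesis using orb[rule_format, of "103"] unfolding e .
  qed
  have o69: "h 69 = h 23"
  proof -
    have e: "(3::G) * 23 = 69" by simp
    show ?thesis using orb[rule_format, of "23"] unfolding e .
  qed
  have o64: "h 64 = h 69"
  proof -
    have e: "(3::G) * 69 = 64" by simp
    show ?thesis using orb[rule_format, of "69"] unfolding e .
  qed
  have o49: "h 49 = h 64"
  proof -
    have e: "(3::G) * 64 = 49" by simp
    show ?thesis using orb[rule_format, of "64"] unfolding e .
  qed
  have o15: "h 15 = h 5"
  proof -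
    have e: "(3::G) * 5 = 15" by simp
    show ?thesis using orb[rule_format, of "5"] unfolding e .
  qed
  have o45: "h 45 = h 15"
  proof -
    have e: "(3::G) * 15 = 45" by simp
    show ?thesis using orb[rule_format, of "15"] unfolding e .
  qed
  have o135: "h 135 = h 45"
  proof -
    have e: "(3::G) * 45 = 135" by simp
    show ?thesis using orb[rule_format, of "45"] unfolding e .
  qed
  have o119: "h 119 = h 135"
  proof -
    have e: "(3::G) * 135 = 119" by simp
    show ?thesis using orb[rule_format, of "135"] unfolding e .
  qed
  have o71: "h 71 = h 119"
  proof -
    have e: "(3::G) * 119 = 71" by simp
    show ?thesis using orb[rule_format, of "119"] unfolding e .
  qed
  have o70: "h 70 = h 71"
  proof -
    have e: "(3::G) * 71 = 70" by simp
    show ?thesis using orb[rule_format, of "71"] unfolding e .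
  qed
  have o67: "h 67 = h 70"
  proof -
    have e: "(3::G) * 70 = 67" by simp
    show ?thesis using orb[rule_format, of "70"] unfolding e .
  qed
  have o58: "h 58 = h 67"
  proof -
    have e: "(3::G) * 67 = 58" by simp
    show ?thesis using orb[rule_format, of "67"] unfolding e .
  qed
  have o31: "h 31 = h 58"
  proof -
    have e: "(3::G) * 58 = 31" by simp
    show ?thesis using orb[rule_format, of "58"] unfolding e .
  qed
  have o93: "h 93 = h 31"
  proof -
    have e: "(3::G) * 31 = 93" by simp
    show ?thesis using orb[rule_format, of "31"] unfolding e .
  qed
  have o136: "h 136 = h 93"
  proof -
    have e: "(3::G) * 93 = 136" by simp
    show ?thesis using orb[rule_format, of "93"] unfolding e .
  qed
  have o122: "h 122 = h 136"
  proof -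
    have e: "(3::G) * 136 = 122" by simp
    show ?thesis using orb[rule_format, of "136"] unfolding e .
  qed
  have o80: "h 80 = h 122"
  proof -
    have e: "(3::G) * 122 = 80" by simp
    show ?thesis using orb[rule_format, of "122"] unfolding e .
  qed
  have o97: "h 97 = h 80"
  proof -
    have e: "(3::G) * 80 = 97" by simp
    show ?thesis using orb[rule_format, of "80"] unfolding e .
  qed
  have o21: "h 21 = h 7"
  proof -
    have e: "(3::G) * 7 = 21" by simp
    show ?thesis using orb[rule_format, of "7"] unfolding e .
  qed
  have o63: "h 63 = h 21"
  proof -
    have e: "(3::G) * 21 = 63" by simp
    show ?thesis using orb[rule_format, of "21"] unfolding e .
  qed
  have o46: "h 46 = h 63"
  proof -
    have e: "(3::G) * 63 = 46" by simp
    show ?thesis using orb[rule_format, of "63"] unfolding e .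
  qed
  have o138: "h 138 = h 46"
  proof -
    have e: "(3::G) * 46 = 138" by simp
    show ?thesis using orb[rule_format, of "46"] unfolding e .
  qed
  have o128: "h 128 = h 138"
  proof -
    have e: "(3::G) * 138 = 128" by simp
    show ?thesis using orb[rule_format, of "138"] unfolding e .
  qed
  have o98: "h 98 = h 128"
  proof -
    have e: "(3::G) * 128 = 98" by simp
    show ?thesis using orb[rule_format, of "128"] unfolding e .
  qed
  have o8: "h 8 = h 98"
  proof -
    have e: "(3::G) * 98 = 8" by simp
    show ?thesis using orb[rule_format, of "98"] unfolding e .
  qed
  have o24: "h 24 = h 8"
  proof -
    have e: "(3::G) * 8 = 24" by simp
    show ?thesis using orb[rule_format, of "8"] unfolding e .
  qed
  have o72: "h 72 = h 24"
  proof -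
    have e: "(3::G) * 24 = 72" by simp
    show ?thesis using orb[rule_format, of "24"] unfolding e .
  qed
  have o73: "h 73 = h 72"
  proof -
    have e: "(3::G) * 72 = 73" by simp
    show ?thesis using orb[rule_format, of "72"] unfolding e .
  qed
  have o76: "h 76 = h 73"
  proof -
    have e: "(3::G) * 73 = 76" by simp
    show ?thesis using orb[rule_format, of "73"] unfolding e .
  qed
  have o85: "h 85 = h 76"
  proof -
    have e: "(3::G) * 76 = 85" by simp
    show ?thesis using orb[rule_format, of "76"] unfolding e .
  qed
  have o112: "h 112 = h 85"
  proof -
    have e: "(3::G) * 85 = 112" by simp
    show ?thesis using orb[rule_format, of "85"] unfolding e .
  qed
  have o50: "h 50 = h 112"
  proof -
    have e: "(3::G) * 112 = 50" by simp
    show ?thesis using orb[rule_format, of "112"] unfolding e .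
  qed
  have o30: "h 30 = h 10"
  proof -
    have e: "(3::G) * 10 = 30" by simp
    show ?thesis using orb[rule_format, of "10"] unfolding e .
  qed
  have o90: "h 90 = h 30"
  proof -
    have e: "(3::G) * 30 = 90" by simp
    show ?thesis using orb[rule_format, of "30"] unfolding e .
  qed
  have o127: "h 127 = h 90"
  proof -
    have e: "(3::G) * 90 = 127" by simp
    show ?thesis using orb[rule_format, of "90"] unfolding e .
  qed
  have o95: "h 95 = h 127"
  proof -
    have e: "(3::G) * 127 = 95" by simp
    show ?thesis using orb[rule_format, of "127"] unfolding e .
  qed
  have o142: "h 142 = h 95"
  proof -
    have e: "(3::G) * 95 = 142" by simp
    show ?thesis using orb[rule_format, of "95"] unfolding e .
  qed
  have o140: "h 140 = h 142"
  proof -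
    have e: "(3::G) * 142 = 140" by simp
    show ?thesis using orb[rule_format, of "142"] unfolding e .
  qed
  have o134: "h 134 = h 140"
  proof -
    have e: "(3::G) * 140 = 134" by simp
    show ?thesis using orb[rule_format, of "140"] unfolding e .
  qed
  have o116: "h 116 = h 134"
  proof -
    have e: "(3::G) * 134 = 116" by simp
    show ?thesis using orb[rule_format, of "134"] unfolding e .
  qed
  have o62: "h 62 = h 116"
  proof -
    have e: "(3::G) * 116 = 62" by simp
    show ?thesis using orb[rule_format, of "116"] unfolding e .
  qed
  have o43: "h 43 = h 62"
  proof -
    have e: "(3::G) * 62 = 43" by simp
    show ?thesis using orb[rule_format, of "62"] unfolding e .
  qed
  have o129: "h 129 = h 43"
  proof -
    have e: "(3::G) * 43 = 129" by simp
    show ?thesis using orb[rule_format, of "43"] unfolding e .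
  qed
  have o101: "h 101 = h 129"
  proof -
    have e: "(3::G) * 129 = 101" by simp
    show ?thesis using orb[rule_format, of "129"] unfolding e .
  qed
  have o17: "h 17 = h 101"
  proof -
    have e: "(3::G) * 101 = 17" by simp
    show ?thesis using orb[rule_format, of "101"] unfolding e .
  qed
  have o51: "h 51 = h 17"
  proof -
    have e: "(3::G) * 17 = 51" by simp
    show ?thesis using orb[rule_format, of "17"] unfolding e .
  qed
  have o33: "h 33 = h 11"
  proof -
    have e: "(3::G) * 11 = 33" by simp
    show ?thesis using orb[rule_format, of "11"] unfolding e .
  qed
  have o99: "h 99 = h 33"
  proof -
    have e: "(3::G) * 33 = 99" by simp
    show ?thesis using orb[rule_format, of "33"] unfolding e .
  qed
  have o39: "h 39 = h 13"
  proof -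
    have e: "(3::G) * 13 = 39" by simp
    show ?thesis using orb[rule_format, of "13"] unfolding e .
  qed
  have o117: "h 117 = h 39"
  proof -
    have e: "(3::G) * 39 = 117" by simp
    show ?thesis using orb[rule_format, of "39"] unfolding e .
  qed
  have o65: "h 65 = h 117"
  proof -
    have e: "(3::G) * 117 = 65" by simp
    show ?thesis using orb[rule_format, of "117"] unfolding e .
  qed
  have o52: "h 52 = h 65"
  proof -
    have e: "(3::G) * 65 = 52" by simp
    show ?thesis using orb[rule_format, of "65"] unfolding e .
  qed
  have o60: "h 60 = h 20"
  proof -
    have e: "(3::G) * 20 = 60" by simp
    show ?thesis using orb[rule_format, of "20"] unfolding e .
  qed
  have o37: "h 37 = h 60"
  proof -
    have e: "(3::G) * 60 = 37" by simp
    show ?thesis using orb[rule_format, of "60"] unfolding e .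
  qed
  have o111: "h 111 = h 37"
  proof -
    have e: "(3::G) * 37 = 111" by simp
    show ?thesis using orb[rule_format, of "37"] unfolding e .
  qed
  have o47: "h 47 = h 111"
  proof -
    have e: "(3::G) * 111 = 47" by simp
    show ?thesis using orb[rule_format, of "111"] unfolding e .
  qed
  have o141: "h 141 = h 47"
  proof -
    have e: "(3::G) * 47 = 141" by simp
    show ?thesis using orb[rule_format, of "47"] unfolding e .
  qed
  have o137: "h 137 = h 141"
  proof -
    have e: "(3::G) * 141 = 137" by simp
    show ?thesis using orb[rule_format, of "141"] unfolding e .
  qed
  have o125: "h 125 = h 137"
  proof -
    have e: "(3::G) * 137 = 125" by simp
    show ?thesis using orb[rule_format, of "137"] unfolding e .
  qed
  have o89: "h 89 = h 125"
  proof -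
    have e: "(3::G) * 125 = 89" by simp
    show ?thesis using orb[rule_format, of "125"] unfolding e .
  qed
  have o124: "h 124 = h 89"
  proof -
    have e: "(3::G) * 89 = 124" by simp
    show ?thesis using orb[rule_format, of "89"] unfolding e .
  qed
  have o86: "h 86 = h 124"
  proof -
    have e: "(3::G) * 124 = 86" by simp
    show ?thesis using orb[rule_format, of "124"] unfolding e .
  qed
  have o115: "h 115 = h 86"
  proof -
    have e: "(3::G) * 86 = 115" by simp
    show ?thesis using orb[rule_format, of "86"] unfolding e .
  qed
  have o59: "h 59 = h 115"
  proof -
    have e: "(3::G) * 115 = 59" by simp
    show ?thesis using orb[rule_format, of "115"] unfolding e .
  qed
  have o34: "h 34 = h 59"
  proof -
    have e: "(3::G) * 59 = 34" by simp
    show ?thesis using orb[rule_format, of "59"] unfolding e .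
  qed
  have o102: "h 102 = h 34"
  proof -
    have e: "(3::G) * 34 = 102" by simp
    show ?thesis using orb[rule_format, of "34"] unfolding e .
  qed
  have o66: "h 66 = h 22"
  proof -
    have e: "(3::G) * 22 = 66" by simp
    show ?thesis using orb[rule_format, of "22"] unfolding e .
  qed
  have o55: "h 55 = h 66"
  proof -
    have e: "(3::G) * 66 = 55" by simp
    show ?thesis using orb[rule_format, of "66"] unfolding e .
  qed
  have o78: "h 78 = h 26"
  proof -
    have e: "(3::G) * 26 = 78" by simp
    show ?thesis using orb[rule_format, of "26"] unfolding e .
  qed
  have o91: "h 91 = h 78"
  proof -
    have e: "(3::G) * 78 = 91" by simp
    show ?thesis using orb[rule_format, of "78"] unfolding e .
  qed
  have o130: "h 130 = h 91"
  proof -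
    have e: "(3::G) * 91 = 130" by simp
    show ?thesis using orb[rule_format, of "91"] unfolding e .
  qed
  have o104: "h 104 = h 130"
  proof -
    have e: "(3::G) * 130 = 104" by simp
    show ?thesis using orb[rule_format, of "130"] unfolding e .
  qed
  have o87: "h 87 = h 29"
  proof -
    have e: "(3::G) * 29 = 87" by simp
    show ?thesis using orb[rule_format, of "29"] unfolding e .
  qed
  have o118: "h 118 = h 87"
  proof -
    have e: "(3::G) * 87 = 118" by simp
    show ?thesis using orb[rule_format, of "87"] unfolding e .
  qed
  have o68: "h 68 = h 118"
  proof -
    have e: "(3::G) * 118 = 68" by simp
    show ?thesis using orb[rule_format, of "118"] unfolding e .
  qed
  have o61: "h 61 = h 68"
  proof -
    have e: "(3::G) * 68 = 61" by simp
    show ?thesis using orb[rule_format, of "68"] unfolding e .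
  qed
  have o40: "h 40 = h 61"
  proof -
    have e: "(3::G) * 61 = 40" by simp
    show ?thesis using orb[rule_format, of "61"] unfolding e .
  qed
  have o120: "h 120 = h 40"
  proof -
    have e: "(3::G) * 40 = 120" by simp
    show ?thesis using orb[rule_format, of "40"] unfolding e .
  qed
  have o74: "h 74 = h 120"
  proof -
    have e: "(3::G) * 120 = 74" by simp
    show ?thesis using orb[rule_format, of "120"] unfolding e .
  qed
  have o79: "h 79 = h 74"
  proof -
    have e: "(3::G) * 74 = 79" by simp
    show ?thesis using orb[rule_format, of "74"] unfolding e .
  qed
  have o94: "h 94 = h 79"
  proof -
    have e: "(3::G) * 79 = 94" by simp
    show ?thesis using orb[rule_format, of "79"] unfolding e .
  qed
  have o139: "h 139 = h 94"
  proof -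
    have e: "(3::G) * 94 = 139" by simp
    show ?thesis using orb[rule_format, of "94"] unfolding e .
  qed
  have o131: "h 131 = h 139"
  proof -
    have e: "(3::G) * 139 = 131" by simp
    show ?thesis using orb[rule_format, of "139"] unfolding e .
  qed
  have o107: "h 107 = h 131"
  proof -
    have e: "(3::G) * 131 = 107" by simp
    show ?thesis using orb[rule_format, of "131"] unfolding e .
  qed
  have o35: "h 35 = h 107"
  proof -
    have e: "(3::G) * 107 = 35" by simp
    show ?thesis using orb[rule_format, of "107"] unfolding e .
  qed
  have o105: "h 105 = h 35"
  proof -
    have e: "(3::G) * 35 = 105" by simp
    show ?thesis using orb[rule_format, of "35"] unfolding e .
  qed
  have o132: "h 132 = h 44"
  proof -
    have e: "(3::G) * 44 = 132" by simp
    show ?thesis using orb[rule_format, of "44"] unfolding e .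
  qed
  have o110: "h 110 = h 132"
  proof -
    have e: "(3::G) * 132 = 110" by simp
    show ?thesis using orb[rule_format, of "132"] unfolding e .
  qed
  have o88: "h 88 = h 77"
  proof -
    have e: "(3::G) * 77 = 88" by simp
    show ?thesis using orb[rule_format, of "77"] unfolding e .
  qed
  have o121: "h 121 = h 88"
  proof -
    have e: "(3::G) * 88 = 121" by simp
    show ?thesis using orb[rule_format, of "88"] unfolding e .
  qed
  note orbs = o3 o9 o27 o81 o100 o14 o42 o126 o92 o133 o113 o53 o16 o48 o6 o18 o54 o19 o57 o28 o84 o109 o41 o123 o83 o106 o32 o96 o12 o36 o108 o38 o114 o56 o25 o75 o82 o103 o23 o69 o64 o49 o15 o45 o135 o119 o71 o70 o67 o58 o31 o93 o136 o122 o80 o97 o21 o63 o46 o138 o128 o98 o8 o24 o72 o73 o76 o85 o112 o50 o30 o90 o127 o95 o142 o140 o134 o116 o62 o43 o129 o101 o17 o51 o33 o99 o39 o117 o65 o52 o60 o37 o111 o47 o141 o137 o125 o89 o124 o86 o115 o59 o34 o102 o66 o55 o78 o91 o130 o104 o87 o118 o68 o61 o40 o120 o74 o79 o94 o139 o131 o107 o35 o105 o132 o110 o88 o121 z143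
  define c0 where "c0 = h 0 + 5 * h 13 + 5 * h 26"
  define c1 where "c1 = h 22 + 5 * (h 1 + h 29)"
  define c2 where "c2 = h 44 + 5 * (h 2 + h 5)"
  define c3 where "c3 = h 77 + 5 * (h 4 + h 10)"
  define c4 where "c4 = h 11 + 5 * (h 7 + h 20)"
  define b0 where "b0 = h 0 + 3 * (h 11 + h 22 + h 44 + h 77)"
  define bq where "bq = h 26 + 3 * (h 1 + h 4 + h 5 + h 20)"
  define bn where "bn = h 13 + 3 * (h 2 + h 7 + h 10 + h 29)"
  have P0: "Pj h 13 11 0 = c0"
    unfolding Pj_def sum11 c0_def by (simp add: orbs algebra_simps)
  have P1: "Pj h 13 11 1 = c1"
    unfolding Pj_def sum11 c1_def by (simp add: orbs algebra_simps)
  have P2: "Pj h 13 11 2 = c2"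
    unfolding Pj_def sum11 c2_def by (simp add: orbs algebra_simps)
  have P3: "Pj h 13 11 3 = c1"
    unfolding Pj_def sum11 c1_def by (simp add: orbs algebra_simps)
  have P4: "Pj h 13 11 4 = c3"
    unfolding Pj_def sum11 c3_def by (simp add: orbs algebra_simps)
  have P5: "Pj h 13 11 5 = c2"
    unfolding Pj_def sum11 c2_def by (simp add: orbs algebra_simps)
  have P6: "Pj h 13 11 6 = c2"
    unfolding Pj_def sum11 c2_def by (simp add: orbs algebra_simps)
  have P7: "Pj h 13 11 7 = c4"
    unfolding Pj_def sum11 c4_def by (simp add: orbs algebra_simps)
  have P8: "Pj h 13 11 8 = c4"
    unfolding Pj_def sum11 c4_def by (simp add: orbs algebra_simps)
  have P9: "Pj h 13 11 9 = c1"
    unfolding Pj_def sum11 c1_def by (simp add: orbs algebra_simps)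
  have P10: "Pj h 13 11 10 = c3"
    unfolding Pj_def sum11 c3_def by (simp add: orbs algebra_simps)
  have P11: "Pj h 13 11 11 = c4"
    unfolding Pj_def sum11 c4_def by (simp add: orbs algebra_simps)
  have P12: "Pj h 13 11 12 = c3"
    unfolding Pj_def sum11 c3_def by (simp add: orbs algebra_simps)
  have P13: "Pj h 13 11 13 = c0"
    unfolding Pj_def sum11 c0_def by (simp add: orbs algebra_simps)
  have Q0: "Pj h 11 13 0 = b0"
    unfolding Pj_def sum13 b0_def by (simp add: orbs algebra_simps)
  have Q1: "Pj h 11 13 1 = bq"
    unfolding Pj_def sum13 bq_def by (simp add: orbs algebra_simps)
  have Q2: "Pj h 11 13 2 = bn"
    unfolding Pj_def sum13 bn_def by (simp add: orbs algebra_simps)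
  have Q3: "Pj h 11 13 3 = bq"
    unfolding Pj_def sum13 bq_def by (simp add: orbs algebra_simps)
  have Q4: "Pj h 11 13 4 = bq"
    unfolding Pj_def sum13 bq_def by (simp add: orbs algebra_simps)
  have Q5: "Pj h 11 13 5 = bq"
    unfolding Pj_def sum13 bq_def by (simp add: orbs algebra_simps)
  have Q6: "Pj h 11 13 6 = bn"
    unfolding Pj_def sum13 bn_def by (simp add: orbs algebra_simps)
  have Q7: "Pj h 11 13 7 = bn"
    unfolding Pj_def sum13 bn_def by (simp add: orbs algebra_simps)
  have Q8: "Pj h 11 13 8 = bn"
    unfolding Pj_def sum13 bn_def by (simp add: orbs algebra_simps)
  have Q9: "Pj h 11 13 9 = bq"
    unfolding Pj_def sum13 bq_def by (simp add: orbs algebra_simps)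
  have Q10: "Pj h 11 13 10 = bn"
    unfolding Pj_def sum13 bn_def by (simp add: orbs algebra_simps)
  note Ps = P0 P1 P2 P3 P4 P5 P6 P7 P8 P9 P10 P11 P12 P13
  note Qs = Q0 Q1 Q2 Q3 Q4 Q5 Q6 Q7 Q8 Q9 Q10
  have F3raw: "(\<Sum>c<13. Pj h 13 11 (of_nat c) * Pj h 13 11 (of_nat c + 0))
       = (\<Sum>k<11. if 0 + of_nat 13 * of_nat k = (0::G) then 81 else 0)"
    by (rule proj[OF _ _ _ AC]) simp_all
  have F3: "c0*c0 + 3*(c1*c1 + c2*c2 + c3*c3 + c4*c4) = 81"
    using F3raw unfolding sum13 sum11 by (simp add: Ps algebra_simps)
  have F5raw: "(\<Sum>c<13. Pj h 13 11 (of_nat c) * Pj h 13 11 (of_nat c + 1))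
       = (\<Sum>k<11. if 1 + of_nat 13 * of_nat k = (0::G) then 81 else 0)"
    by (rule proj[OF _ _ _ AC]) simp_all
  have F5: "c0*c1 + c0*c3 + 2*c1*c2 + 2*c1*c3 + c2*c3 + c2*c2 + c2*c4 + c4*c4 + c1*c4 + 2*c3*c4 = 0"
    using F5raw unfolding sum13 sum11 by (simp add: Ps algebra_simps)
  have F4raw: "(\<Sum>c<11. Pj h 11 13 (of_nat c) * Pj h 11 13 (of_nat c + 0))
       = (\<Sum>k<13. if 0 + of_nat 11 * of_nat k = (0::G) then 81 else 0)"
    by (rule proj[OF _ _ _ AC]) simp_all
  have F4: "b0*b0 + 5*(bq*bq + bn*bn) = 81"
    using F4raw unfolding sum13 sum11 by (simp add: Qs algebra_simps)
  have Ssum: "(\<Sum>x\<in>UNIV. h x) = c0 + 3*(c1+c2+c3+c4)"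
  proof -
    have "(\<Sum>x\<in>UNIV. h x) = (\<Sum>c<13. \<Sum>k<11. h (of_nat c + of_nat 13 * of_nat k))"
      by (rule sum_G_split) simp_all
    also have "\<dots> = (\<Sum>c<13. Pj h 13 11 (of_nat c))" unfolding Pj_def ..
    also have "\<dots> = c0 + 3*(c1+c2+c3+c4)" unfolding sum13 by (simp add: Ps algebra_simps)
    finally show ?thesis .
  qed
  have F2: "(c0 + 3*(c1+c2+c3+c4)) * (c0 + 3*(c1+c2+c3+c4)) = 81"
    using total_sq[OF AC] unfolding Ssum by (simp add: power2_eq_square)
  have T: "t3 (h x)" for x using vals unfolding t3_def by blast
  show False
    by (rule final_int[OF T T T T T T T T T T T T T T T c0_def c1_def c2_def c3_def c4_def
          b0_def bq_def bn_def F3 F4 F2 F5])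
qed

theorem proposition4:
  shows "\<not> (\<exists>W. circulant_weighing_matrix 143 81 W)"
proof
  assume "\<exists>W. circulant_weighing_matrix 143 81 W"
  then obtain W where cw: "circulant_weighing_matrix 143 81 W" by blast
  have circ: "\<And>i j. i < 143 \<Longrightarrow> j < 143 \<Longrightarrow> W i j = W 0 ((j + 143 - i) mod 143)"
    using cw unfolding circulant_weighing_matrix_def circulant_def by blast
  have wv: "\<And>i j. i < 143 \<Longrightarrow> j < 143 \<Longrightarrow> W i j \<in> {0, 1, -1}"
    using cw unfolding circulant_weighing_matrix_def by blast
  have orth: "\<And>i j. i < 143 \<Longrightarrow> j < 143 \<Longrightarrow>
      (\<Sum>l<143. W i l * W j l) = (if i = j then int 81 else 0)"
    using cw unfolding circulant_weighing_matrix_def by blast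
  define a where "a j = W 0 j" for j
  define f :: "G \<Rightarrow> int" where "f x = a (nat (Rep_bit1 x))" for x
  have fa: "f (of_nat i) = a i" if "i < 143" for i
    using that unfolding f_def by (simp add: Rep_of_nat_G)
  have ACnat: "(\<Sum>l<143. a l * a ((l + 143 - j) mod 143)) = (if j = 0 then 81 else 0)"
    if "j < 143" for j
  proof -
    have "(\<Sum>l<143. a l * a ((l + 143 - j) mod 143)) = (\<Sum>l<143. W 0 l * W j l)"
      using circ[OF that] unfolding a_def by (intro sum.cong) auto
    also have "\<dots> = (if j = 0 then 81 else 0)" using orth[of 0 j] that by simp
    finally show ?thesis .
  qed
  have AC: "(\<Sum>x\<in>UNIV. f x * f (x - k)) = (if k = 0 then 81 else 0)" for k
  proof -
    obtain j where j: "j < 143" "k = of_nat j" using of_nat_G_surj by blast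
    have "(\<Sum>x\<in>UNIV. f x * f (x - k)) = (\<Sum>i<143. f (of_nat i) * f (of_nat i - of_nat j))"
      unfolding j(2) by (rule sum_G)
    also have "\<dots> = (\<Sum>i<143. a i * a ((i + 143 - j) mod 143))"
    proof (rule sum.cong[OF refl])
      fix i assume i: "i \<in> {..<143::nat}"
      have "(of_nat ((i + 143 - j) mod 143) :: G) = of_nat (i + 143 - j)" by (rule of_nat_G_mod)
      also have "\<dots> = of_nat i + of_nat 143 - of_nat j" using j(1) by (simp add: of_nat_diff)
      also have "\<dots> = of_nat i - of_nat j" by simp
      finally have e: "(of_nat i - of_nat j :: G) = of_nat ((i + 143 - j) mod 143)" ..
      show "f (of_nat i) * f (of_nat i - of_nat j) = a i * a ((i + 143 - j) mod 143)"
        unfolding e using i by (simp add: fa)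
    qed
    also have "\<dots> = (if j = 0 then 81 else 0)" by (rule ACnat[OF j(1)])
    also have "\<dots> = (if k = 0 then 81 else 0)"
    proof -
      have "(k = 0) = (j = 0)"
      proof
        assume "k = 0"
        then have "(of_nat j :: G) = of_nat 0" using j(2) by simp
        then show "j = 0" using of_nat_G_inj[of j 0] j(1) by simp
      qed (use j in simp)
      then show ?thesis by simp
    qed
    finally show ?thesis .
  qed
  have fvals: "\<forall>x. f x = -1 \<or> f x = 0 \<or> f x = 1"
  proof
    fix x :: G
    obtain i where i1: "i < 143" and i2: "x = of_nat i" using of_nat_G_surj by blast
    have w: "W 0 i = 0 \<or> W 0 i = 1 \<or> W 0 i = -1" using wv[of 0 i] i1 by simp
    have "f x = W 0 i" using fa[OF i1] unfolding i2 a_def .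
    then show "f x = -1 \<or> f x = 0 \<or> f x = 1" using w by auto
  qed
  obtain h :: "G \<Rightarrow> int" where ACh: "\<forall>k. (\<Sum>x\<in>UNIV. h x * h (x - k)) = (if k = 0 then 81 else 0)"
    and orb: "\<forall>x. h (3 * x) = h x" and hf: "\<forall>x. \<exists>y. h x = f y"
    using normalize[OF AC] by blast
  have hvals: "\<forall>x. h x = -1 \<or> h x = 0 \<or> h x = 1"
  proof
    fix x :: G
    obtain y where "h x = f y" using hf by blast
    then show "h x = -1 \<or> h x = 0 \<or> h x = 1" using fvals by simp
  qed
  show False
    by (rule final_numeric[OF hvals orb]) (use ACh in blast)
qed

end
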